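(* Let $\mathcal{A}$ be a finite totally ordered alphabet, let $\sigma:\mathcal{A}\to\mathbb{N}_{\geq2}$, and let $\mathbf{M}\in\{\mathbf{Plax},\mathbf{Ch}\}$. Then $\mathbf{M}(\mathcal{A},\sigma)$ contains exactly $2^{|\mathcal{A}|}$ idempotents, one for each subset $\mathcal{B}=\{b_1<b_2<\cdots<b_k\}\subseteq\mathcal{A}$. The idempotent corresponding to $\mathcal{B}$ is the element of $\mathbf{M}(\mathcal{A},\sigma)$ represented by a word $I\in\mathcal{A}^*$ which is an inflation of a word representing the minimum element for the $\mathscr{J}$-order of $\mathbf{M}(\mathcal{B},2)$, and whose evaluation in $\mathbf{Com}(\mathcal{A},\sigma)$ is $\prod_{i=1}^k b_i^{\sigma(b_i)-1}$.
   Context: The plactic monoid $\mathbf{Plax}(\mathcal{A})$ is the quotient of the free monoid $\mathcal{A}^*$ by the relations $acb=cab$ for $a\le b<c$ and $bac=bca$ for $a<b\le c$. The Chinese monoid $\mathbf{Ch}(\mathcal{A})$ is the quotient of $\mathcal{A}^*$ by the relations $cba=cab=bca$ for $a<b<c$, and $aba=baa$, $bba=bab$ for $a<b$. For $\sigma:\mathcal{A}\to\mathbb{N}_{\geq2}$, $\mathbf{M}(\mathcal{A},\sigma)$ is the quotient of $\mathbf{M}(\mathcal{A})$ obtained by adding the relations $a^{\sigma(a)}=a$ for every $a\in\mathcal{A}$; $\mathbf{M}(\mathcal{B},2)$, for $\mathcal{B}\subseteq\mathcal{A}$ with the induced order, is the same construction over the alphabet $\mathcal{B}$ with $\sigma$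 constant equal to $2$. $\mathbf{Com}(\mathcal{A},\sigma)$ is the quotient of the free commutative monoid on $\mathcal{A}$ by the relations $a^{\sigma(a)}=a$, and the evaluation of a word is its image there. An inflation of a word $w_1\cdots w_m$ is any word $w_1^{\epsilon_1}\cdots w_m^{\epsilon_m}$ with all $\epsilon_j\geq1$. The $\mathscr{J}$-order on a monoid $M$ is the preorder $x\le_{\mathscr{J}}y$ iff $MxM\subseteq MyM$; the minimum element is the element $z$ with $z\le_{\mathscr{J}}x$ for all $x$. *)

theory Defs
  imports Main
begin

inductive rstep :: "('a list \<times> 'a list) set \<Rightarrow> 'a list \<Rightarrow> 'a list \<Rightarrow> bool"
  for R where
  "(u, v) \<in> R \<Longrightarrow> rstep R (x @ u @ y) (x @ v @ y)"

definition cong_gen :: "('a list \<times> 'a list) set \<Rightarrow> 'a list \<Rightarrow> 'a list \<Rightarrow> bool" where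
  "cong_gen R = equivclp (rstep R)"

datatype monoid_kind = Plax | Ch

definition plax_rels :: "'a::linorder set \<Rightarrow> ('a list \<times> 'a list) set" where
  "plax_rels A =
     {([a, c, b], [c, a, b]) | a b c. a \<in> A \<and> b \<in> A \<and> c \<in> A \<and> a \<le> b \<and> b < c}
   \<union> {([b, a, c], [b, c, a]) | a b c. a \<in> A \<and> b \<in> A \<and> c \<in> A \<and> a < b \<and> b \<le> c}"

definition ch_rels :: "'a::linorder set \<Rightarrow> ('a list \<times> 'a list) set" where
  "ch_rels A =
     {([c, b, a], [c, a, b]) | a b c. a \<in> A \<and> b \<in> A \<and> c \<in> A \<and> a < b \<and> b < c}
   \<union> {([c, a, b], [b, c, a]) | a b c. a \<in> A \<and> b \<in> A \<and> c \<in> A \<and> a < b \<and> b < c}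
   \<union> {([a, b, a], [b, a, a]) | a b. a \<in> A \<and> b \<in> A \<and> a < b}
   \<union> {([b, b, a], [b, a, b]) | a b. a \<in> A \<and> b \<in> A \<and> a < b}"

definition base_rels :: "monoid_kind \<Rightarrow> 'a::linorder set \<Rightarrow> ('a list \<times> 'a list) set" where
  "base_rels M A = (case M of Plax \<Rightarrow> plax_rels A | Ch \<Rightarrow> ch_rels A)"

definition pow_rels :: "'a set \<Rightarrow> ('a \<Rightarrow> nat) \<Rightarrow> ('a list \<times> 'a list) set" where
  "pow_rels A \<sigma> = {(replicate (\<sigma> a) a, [a]) | a. a \<in> A}"

definition M_rels :: "monoid_kind \<Rightarrow> 'a::linorder set \<Rightarrow> ('a \<Rightarrow> nat) \<Rightarrow> ('a list \<times> 'a list) set" where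
  "M_rels M A \<sigma> = base_rels M A \<union> pow_rels A \<sigma>"

definition Com_rels :: "'a set \<Rightarrow> ('a \<Rightarrow> nat) \<Rightarrow> ('a list \<times> 'a list) set" where
  "Com_rels A \<sigma> = {([a, b], [b, a]) | a b. a \<in> A \<and> b \<in> A} \<union> pow_rels A \<sigma>"

definition elem_of :: "('a list \<times> 'a list) set \<Rightarrow> 'a set \<Rightarrow> 'a list \<Rightarrow> 'a list set" where
  "elem_of R A w = {v \<in> lists A. cong_gen R w v}"

definition idempotents :: "monoid_kind \<Rightarrow> 'a::linorder set \<Rightarrow> ('a \<Rightarrow> nat) \<Rightarrow> 'a list set set" where
  "idempotents M A \<sigma> =
     {elem_of (M_rels M A \<sigma>) A w | w. w \<in> lists A \<and> cong_gen (M_rels M A \<sigma>) (w @ w) w}"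

text \<open>The word m (over B) represents a minimum element for the J-order of M(B,2):
  M m M \<subseteq> M x M for all x, i.e. m is equivalent to u x v for some u, v.\<close>
definition J_min_word :: "monoid_kind \<Rightarrow> 'a::linorder set \<Rightarrow> 'a list \<Rightarrow> bool" where
  "J_min_word M B m \<longleftrightarrow> m \<in> lists B \<and>
     (\<forall>x \<in> lists B. \<exists>u \<in> lists B. \<exists>v \<in> lists B. cong_gen (M_rels M B (\<lambda>_. 2)) m (u @ x @ v))"

inductive inflation :: "'a list \<Rightarrow> 'a list \<Rightarrow> bool" where
  "inflation [] []"
| "e \<ge> 1 \<Longrightarrow> inflation w I \<Longrightarrow> inflation (c # w) (replicate e c @ I)"

definition target_word :: "'a::linorder set \<Rightarrow> ('a \<Rightarrow> nat) \<Rightarrow> 'a list" where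
  "target_word B \<sigma> = concat (map (\<lambda>b. replicate (\<sigma> b - 1) b) (sorted_list_of_set B))"

end

theory Submission
  imports Defs "HOL-Library.Multiset"
begin

lemma cg_refl[simp]: "cong_gen R u u"
  unfolding cong_gen_def by simp

lemma cg_sym: "cong_gen R u v \<Longrightarrow> cong_gen R v u"
  unfolding cong_gen_def by (rule equivclp_sym)

lemma cg_trans[trans]: "cong_gen R u v \<Longrightarrow> cong_gen R v w \<Longrightarrow> cong_gen R u w"
  unfolding cong_gen_def by (rule equivclp_trans)

lemma cg_rel: "(u, v) \<in> R \<Longrightarrow> cong_gen R u v"
proof -
  assume "(u, v) \<in> R"
  then have "rstep R ([] @ u @ []) ([] @ v @ [])" by (rule rstep.intros)
  then show ?thesis unfolding cong_gen_def by auto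
qed

lemma rstep_ctx: "rstep R u v \<Longrightarrow> rstep R (x @ u @ y) (x @ v @ y)"
proof (induction rule: rstep.induct)
  case (1 u v x' y')
  have "rstep R ((x @ x') @ u @ (y' @ y)) ((x @ x') @ v @ (y' @ y))"
    using 1 by (rule rstep.intros)
  then show ?case by simp
qed

lemma cg_ctx: "cong_gen R u v \<Longrightarrow> cong_gen R (x @ u @ y) (x @ v @ y)"
  unfolding cong_gen_def
proof (induction rule: equivclp_induct)
  case base
  then show ?case by simp
next
  case (step b c)
  from step.hyps(2) have "rstep R (x @ b @ y) (x @ c @ y) \<or> rstep R (x @ c @ y) (x @ b @ y)"
    by (auto intro: rstep_ctx)
  then show ?case using step.IH
    by (rule equivclp_into_equivclp[rotated])
qed

lemma cg_app: "cong_gen R u u' \<Longrightarrow> cong_gen R v v' \<Longrightarrow> cong_gen R (u @ v) (u' @ v')"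
proof -
  assume a: "cong_gen R u u'" and b: "cong_gen R v v'"
  have "cong_gen R ([] @ u @ v) ([] @ u' @ v)" using cg_ctx[OF a] .
  moreover have "cong_gen R (u' @ v @ []) (u' @ v' @ [])" using cg_ctx[OF b] .
  ultimately show ?thesis using cg_trans by fastforce
qed

lemma cg_at: "cong_gen R u v \<Longrightarrow> l = x @ u @ y \<Longrightarrow> r = x @ v @ y \<Longrightarrow> cong_gen R l r"
  using cg_ctx by blast

lemma rstep_mono: "R \<subseteq> S \<Longrightarrow> rstep R u v \<Longrightarrow> rstep S u v"
  by (auto elim!: rstep.cases intro: rstep.intros)

lemma cg_mono: "R \<subseteq> S \<Longrightarrow> cong_gen R u v \<Longrightarrow> cong_gen S u v"
proof -
  assume RS: "R \<subseteq> S" and "cong_gen R u v"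
  then have "equivclp (rstep R) u v" unfolding cong_gen_def by simp
  then show ?thesis unfolding cong_gen_def
  proof (induction rule: equivclp_induct)
    case base then show ?case by simp
  next
    case (step b c)
    from step.hyps(2) have "rstep S b c \<or> rstep S c b"
      using RS rstep_mono by blast
    then show ?case using step.IH
      by (rule equivclp_into_equivclp[rotated])
  qed
qed

lemma cg_set:
  assumes "\<And>u v. (u, v) \<in> R \<Longrightarrow> set u = set v"
  shows "cong_gen R u v \<Longrightarrow> set u = set v"
  unfolding cong_gen_def
proof (induction rule: equivclp_induct)
  case base then show ?case by simp
next
  case (step b c)
  from step.hyps(2) have "set b = set c"
    by (auto elim!: rstep.cases dest: assms)
  then show ?case using step.IH by simp
qed

locale alph =
  fixes X :: "'a::linorder set" and \<sigma> :: "'a \<Rightarrow> nat"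
  assumes sig2: "x \<in> X \<Longrightarrow> 2 \<le> \<sigma> x"
begin

abbreviation eqv :: "monoid_kind \<Rightarrow> 'a list \<Rightarrow> 'a list \<Rightarrow> bool" where
  "eqv M u v \<equiv> cong_gen (M_rels M X \<sigma>) u v"

lemma pow_rel: "a \<in> X \<Longrightarrow> eqv M (replicate (\<sigma> a) a) [a]"
  by (rule cg_rel) (auto simp: M_rels_def pow_rels_def)

lemma pump: "a \<in> X \<Longrightarrow> eqv M [a] (replicate (\<sigma> a) a)"
  by (rule cg_sym, rule pow_rel)

lemma pump2: "a \<in> X \<Longrightarrow> eqv M [a] (replicate (\<sigma> a - 2) a @ [a, a])"
proof -
  assume a: "a \<in> X"
  have e: "\<sigma> a = (\<sigma> a - 2) + 2" using sig2[OF a] by simp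
  have "replicate (\<sigma> a) a = replicate (\<sigma> a - 2) a @ replicate 2 a"
    by (subst e) (rule replicate_add)
  then show ?thesis using pump[OF a, of M] by (simp add: numeral_2_eq_2)
qed

lemma plx1: "a \<in> X \<Longrightarrow> b \<in> X \<Longrightarrow> c \<in> X \<Longrightarrow> a \<le> b \<Longrightarrow> b < c \<Longrightarrow>
  eqv Plax [a, c, b] [c, a, b]"
  by (rule cg_rel) (auto simp: M_rels_def base_rels_def plax_rels_def)

lemma plx2: "a \<in> X \<Longrightarrow> b \<in> X \<Longrightarrow> c \<in> X \<Longrightarrow> a < b \<Longrightarrow> b \<le> c \<Longrightarrow>
  eqv Plax [b, a, c] [b, c, a]"
  by (rule cg_rel) (auto simp: M_rels_def base_rels_def plax_rels_def)

lemma ch1: "a \<in> X \<Longrightarrow> b \<in> X \<Longrightarrow> c \<in> X \<Longrightarrow> a < b \<Longrightarrow> b < c \<Longrightarrow>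
  eqv Ch [c, b, a] [c, a, b]"
  by (rule cg_rel) (auto simp: M_rels_def base_rels_def ch_rels_def)

lemma ch2: "a \<in> X \<Longrightarrow> b \<in> X \<Longrightarrow> c \<in> X \<Longrightarrow> a < b \<Longrightarrow> b < c \<Longrightarrow>
  eqv Ch [c, a, b] [b, c, a]"
  by (rule cg_rel) (auto simp: M_rels_def base_rels_def ch_rels_def)

lemma ch3: "a \<in> X \<Longrightarrow> b \<in> X \<Longrightarrow> a < b \<Longrightarrow> eqv Ch [a, b, a] [b, a, a]"
  by (rule cg_rel) (auto simp: M_rels_def base_rels_def ch_rels_def)

lemma ch4: "a \<in> X \<Longrightarrow> b \<in> X \<Longrightarrow> a < b \<Longrightarrow> eqv Ch [b, b, a] [b, a, b]"
  by (rule cg_rel) (auto simp: M_rels_def base_rels_def ch_rels_def)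

lemma moveR:
  "sorted_wrt (>) M \<Longrightarrow> set M \<subseteq> X \<Longrightarrow> t \<in> X \<Longrightarrow> q \<in> X \<Longrightarrow> t \<le> q \<Longrightarrow>
   (\<forall>m\<in>set M. q < m) \<Longrightarrow> eqv Plax (t # M @ [q]) (M @ [t, q])"
proof (induction M)
  case Nil then show ?case by simp
next
  case (Cons m M')
  obtain b rest where br: "M' @ [q] = b # rest" by (cases "M' @ [q]") auto
  have bq: "b = q \<or> b \<in> set M'" using br by (cases M') auto
  have bX: "b \<in> X" using bq Cons.prems by auto
  have tb: "t \<le> b" "b < m" using bq Cons.prems by auto
  have s1: "eqv Plax [t, m, b] [m, t, b]"
    using plx1[of t b m] Cons.prems bX tb by auto
  have "eqv Plax (t # m # M' @ [q]) (m # t # M' @ [q])"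
    using cg_ctx[OF s1, of "[]" rest] br by simp
  also have "eqv Plax (m # t # M' @ [q]) (m # M' @ [t, q])"
    using cg_ctx[OF Cons.IH, of "[m]" "[]"] Cons.prems by simp
  finally show ?case by simp
qed

lemma moveR2:
  "sorted_wrt (>) M \<Longrightarrow> set M \<subseteq> X \<Longrightarrow> p \<in> X \<Longrightarrow> t \<in> X \<Longrightarrow> p \<le> t \<Longrightarrow>
   (\<forall>m\<in>set M. m < p) \<Longrightarrow> eqv Plax (p # t # M) (p # M @ [t])"
proof (induction M arbitrary: p)
  case Nil then show ?case by simp
next
  case (Cons m M')
  have s1: "eqv Plax [p, t, m] [p, m, t]"
    using cg_sym[OF plx2[of m p t]] Cons.prems by auto
  have "eqv Plax (p # t # m # M') (p # m # t # M')"
    using cg_ctx[OF s1, of "[]" M'] by simp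
  also have "eqv Plax (p # m # t # M') (p # m # M' @ [t])"
    using cg_ctx[OF Cons.IH[of m], of "[p]" "[]"] Cons.prems by auto
  finally show ?case by simp
qed

lemma moveL:
  "sorted_wrt (>) M \<Longrightarrow> set M \<subseteq> X \<Longrightarrow> p \<in> X \<Longrightarrow> t \<in> X \<Longrightarrow> p \<le> t \<Longrightarrow>
   (\<forall>m\<in>set M. m < p) \<Longrightarrow> eqv Plax (p # M @ [t]) (p # t # M)"
  by (rule cg_sym, rule moveR2)

end

context alph begin

lemma dec_split:
  assumes "sorted_wrt (>) (U @ x # L)"
  shows "sorted_wrt (>) U" "sorted_wrt (>) L" "\<forall>u\<in>set U. x < u" "\<forall>l\<in>set L. l < x"
    "\<forall>u\<in>set U. \<forall>l\<in>set L. l < u"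
  using assms by (auto simp: sorted_wrt_append)

lemma pl_central:
  assumes D: "sorted_wrt (>) D" "set D \<subseteq> X" and x: "x \<in> set D"
  shows "eqv Plax (x # D) (D @ [x])"
proof -
  obtain U L where DU: "D = U @ x # L" using split_list[OF x] by blast
  note sp = dec_split[OF D(1)[unfolded DU]]
  have X: "set U \<subseteq> X" "set L \<subseteq> X" "x \<in> X" using D(2) DU by auto
  have "eqv Plax (x # U @ [x]) (U @ [x, x])"
    using moveR[OF sp(1) X(1) X(3) X(3)] sp by auto
  then have "eqv Plax (x # U @ x # L) (U @ [x, x] @ L)"
    using cg_ctx[of _ "x # U @ [x]" "U @ [x, x]" "[]" L] by simp
  also have "eqv Plax (U @ [x, x] @ L) (U @ [x] @ L @ [x])"
    using cg_ctx[OF moveR2[OF sp(2) X(2) X(3) X(3)], of U "[]"] sp by auto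
  finally show ?thesis using DU by simp
qed

lemma rep_snoc: "replicate n x @ x # L = x # replicate n x @ L"
  by (induction n) auto

lemma pl_infl:
  assumes "sorted_wrt (>) (x # L)" "set L \<subseteq> X" "x \<in> X"
  shows "eqv Plax (U @ x # L @ replicate n x) (U @ replicate n x @ x # L)"
proof (induction n)
  case 0 then show ?case by simp
next
  case (Suc n)
  have "eqv Plax (U @ x # L @ replicate n x @ [x]) (U @ replicate n x @ x # L @ [x])"
    using cg_ctx[OF Suc.IH, of "[]" "[x]"] by simp
  also have "eqv Plax (U @ replicate n x @ x # L @ [x]) (U @ replicate n x @ x # x # L)"
    using cg_ctx[OF moveL[of L x x], of "U @ replicate n x" "[]"] assms by simp
  finally have c: "eqv Plax (U @ x # L @ replicate n x @ [x]) (U @ replicate n x @ x # x # L)" .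
  have e1: "replicate (Suc n) x = replicate n x @ [x]" by (simp add: replicate_append_same)
  show ?case using c by (simp only: e1 append_assoc append_Cons append_Nil)
qed

lemma pl_pow:
  assumes D: "sorted_wrt (>) D" "set D \<subseteq> X" and x: "x \<in> set D"
  shows "eqv Plax (D @ replicate (\<sigma> x - 1) x) D"
proof -
  obtain U L where DU: "D = U @ x # L" using split_list[OF x] by blast
  have X: "set U \<subseteq> X" "set L \<subseteq> X" "x \<in> X" using D(2) DU by auto
  have s: "sorted_wrt (>) (x # L)" using D(1) DU by (simp add: sorted_wrt_append)
  have e: "Suc (\<sigma> x - 1) = \<sigma> x" using sig2[OF X(3)] by simp
  have "eqv Plax (D @ replicate (\<sigma> x - 1) x) (U @ replicate (\<sigma> x) x @ L)"
    using pl_infl[OF s X(2) X(3), of U "\<sigma> x - 1"] DU e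
    by (metis append_Cons append_assoc rep_snoc replicate_Suc)
  also have "eqv Plax (U @ replicate (\<sigma> x) x @ L) (U @ [x] @ L)"
    using cg_ctx[OF pow_rel[OF X(3)]] .
  finally show ?thesis using DU by simp
qed

lemma loc5:
  assumes "x \<in> X" "w \<in> X" "y \<in> X" "x < w" "w \<le> y"
  shows "eqv Plax [w, w, x, x, y] [w, w, y, x, x]"
proof -
  have s1: "eqv Plax [w, x, x] [x, w, x]" using cg_sym[OF plx1[of x x w]] assms by auto
  have s2: "eqv Plax [w, x, y] [w, y, x]" using plx2[of x w y] assms by auto
  have s3: "eqv Plax [w, x, w] [w, w, x]" using plx2[of x w w] assms by auto
  have "eqv Plax [w, w, x, x, y] [w, x, w, x, y]" using cg_ctx[OF s1, of "[w]" "[y]"] by simp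
  also have "eqv Plax [w, x, w, x, y] [w, x, w, y, x]" using cg_ctx[OF s2, of "[w, x]" "[]"] by simp
  also have "eqv Plax [w, x, w, y, x] [w, w, x, y, x]" using cg_ctx[OF s3, of "[]" "[y, x]"] by simp
  also have "eqv Plax [w, w, x, y, x] [w, w, y, x, x]" using cg_ctx[OF s2, of "[w]" "[x]"] by simp
  finally show ?thesis .
qed

lemma wlem:
  assumes "x \<in> X" "w \<in> X" "y \<in> X" "x < w" "w \<le> y"
  shows "eqv Plax (U @ [w, x, x, y] @ L) (U @ [w, y, x, x] @ L)"
proof -
  define r where "r = replicate (\<sigma> w - 2) w"
  have p: "eqv Plax [w] (r @ [w, w])" using pump2[OF assms(2)] r_def by simp
  have "eqv Plax (U @ [w] @ ([x, x, y] @ L)) (U @ (r @ [w, w]) @ ([x, x, y] @ L))"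
    by (rule cg_ctx[OF p])
  also have "eqv Plax (U @ (r @ [w, w]) @ ([x, x, y] @ L)) (U @ (r @ [w, w]) @ ([y, x, x] @ L))"
    using cg_ctx[OF loc5[OF assms], of "U @ r" L] by simp
  also have "eqv Plax (U @ (r @ [w, w]) @ ([y, x, x] @ L)) (U @ [w] @ ([y, x, x] @ L))"
    by (rule cg_ctx[OF cg_sym[OF p]])
  finally show ?thesis by simp
qed

lemma pl_comm_lt:
  assumes D: "sorted_wrt (>) D" "set D \<subseteq> X" and xy: "x \<in> set D" "y \<in> set D" "x < y"
  shows "eqv Plax (D @ [x, y]) (D @ [y, x])"
proof -
  obtain P L where DP: "D = P @ x # L" using split_list[OF xy(1)] by blast
  have yP: "y \<in> set P" using xy D(1) DP by (auto simp: sorted_wrt_append)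
  then obtain U w where Pw: "P = U @ [w]" by (cases P rule: rev_cases) auto
  have DU: "D = U @ w # x # L" using DP Pw by simp
  have s: "sorted_wrt (>) (x # L)" "\<forall>l\<in>set L. l < x" "x < w" "\<forall>u\<in>set U. w < u"
    using D(1) DU by (auto simp: sorted_wrt_append)
  have wy: "w \<le> y" using yP Pw s(4) by auto
  have X: "set U \<subseteq> X" "set L \<subseteq> X" "x \<in> X" "w \<in> X" "y \<in> X" using D(2) DU xy by auto
  have sL: "sorted_wrt (>) L" using s(1) by simp
  have mxx: "eqv Plax (x # L @ [x]) (x # x # L)" using moveL[OF sL X(2) X(3) X(3)] s by auto
  have mxy: "eqv Plax (x # L @ [y]) (x # y # L)" using moveL[OF sL X(2) X(3) X(5)] s xy by auto
  have "eqv Plax (D @ [x, y]) (U @ [w] @ (x # x # L) @ [y])"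
    using cg_ctx[OF mxx, of "U @ [w]" "[y]"] DU by simp
  also have "eqv Plax (U @ [w] @ (x # x # L) @ [y]) (U @ [w, x] @ (x # y # L))"
    using cg_ctx[OF mxy, of "U @ [w, x]" "[]"] by simp
  also have "eqv Plax (U @ [w, x] @ (x # y # L)) (U @ [w, y, x, x] @ L)"
    using wlem[OF X(3) X(4) X(5) s(3) wy, of U L] by simp
  finally have l: "eqv Plax (D @ [x, y]) (U @ [w, y, x, x] @ L)" .
  have "eqv Plax (D @ [y, x]) (U @ [w] @ (x # y # L) @ [x])"
    using cg_ctx[OF mxy, of "U @ [w]" "[x]"] DU by simp
  also have "eqv Plax (U @ [w] @ (x # y # L) @ [x]) (U @ [w, y, x] @ L @ [x])"
    using cg_ctx[OF plx2[of x w y], of U "L @ [x]"] X s wy by simp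
  also have "eqv Plax (U @ [w, y, x] @ L @ [x]) (U @ [w, y] @ (x # x # L))"
    using cg_ctx[OF mxx, of "U @ [w, y]" "[]"] by simp
  finally have r: "eqv Plax (D @ [y, x]) (U @ [w, y, x, x] @ L)" by simp
  show ?thesis using l cg_sym[OF r] cg_trans by blast
qed

lemma pl_comm:
  assumes D: "sorted_wrt (>) D" "set D \<subseteq> X" and xy: "x \<in> set D" "y \<in> set D"
  shows "eqv Plax (D @ [x, y]) (D @ [y, x])"
proof -
  consider "x = y" | "x < y" | "y < x" by fastforce
  then show ?thesis
  proof cases
    case 1 then show ?thesis by simp
  next
    case 2 then show ?thesis using pl_comm_lt[OF D xy] by simp
  next
    case 3 then show ?thesis using cg_sym[OF pl_comm_lt[OF D xy(2) xy(1)]] by simp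
  qed
qed

end

lemma cg_pow: "cong_gen R (u @ u) u \<Longrightarrow> 1 \<le> n \<Longrightarrow> cong_gen R (concat (replicate n u)) u"
proof (induction n)
  case 0 then show ?case by simp
next
  case (Suc n)
  show ?case
  proof (cases n)
    case 0 then show ?thesis by simp
  next
    case (Suc m)
    then have "cong_gen R (concat (replicate n u)) u" using Suc.IH Suc.prems by simp
    then have "cong_gen R (u @ concat (replicate n u)) (u @ u)" using cg_ctx[of R _ _ u "[]"] by simp
    then show ?thesis using Suc.prems(1) cg_trans by fastforce
  qed
qed

definition col :: "'a::linorder set \<Rightarrow> 'a list" where
  "col T = rev (sorted_list_of_set T)"

lemma col_set: "sorted_wrt (>) xs \<Longrightarrow> col (set xs) = xs"
proof -
  assume s: "sorted_wrt (>) xs"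
  have d: "distinct xs" using s by (induction xs) auto
  have "sorted_wrt (<) (rev xs) \<and> set (rev xs) = set xs \<and> length (rev xs) = card (set xs)"
    using s d by (simp add: sorted_wrt_rev distinct_card)
  then have "sorted_list_of_set (set xs) = rev xs"
    using sorted_list_of_set_unique[of "set xs" "rev xs"] by simp
  then show ?thesis unfolding col_def by simp
qed

lemma col_props: "finite T \<Longrightarrow> sorted_wrt (>) (col T) \<and> set (col T) = T"
  unfolding col_def by (simp add: sorted_wrt_rev strict_sorted_list_of_set)

definition upd :: "'a::linorder \<Rightarrow> 'a set \<Rightarrow> 'a set" where
  "upd t T = (if \<forall>y\<in>T. y < t then insert t T else insert t (T - {Min {y\<in>T. t \<le> y}}))"

lemma upd_sub: "upd t T \<subseteq> insert t T"
  unfolding upd_def by auto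

lemma upd_fin: "finite T \<Longrightarrow> finite (upd t T)"
  unfolding upd_def by auto

lemma foldr_upd_sub: "foldr upd v T \<subseteq> set v \<union> T"
  by (induction v) (use upd_sub in fastforce)+

lemma foldr_upd_fin: "finite T \<Longrightarrow> finite (foldr upd v T)"
  by (induction v) (auto simp: upd_fin)

lemma upd_Min:
  assumes "finite T" "\<not> (\<forall>y\<in>T. y < t)"
  defines "s \<equiv> Min {y\<in>T. t \<le> y}"
  shows "s \<in> T" "t \<le> s" "\<And>y. y \<in> T \<Longrightarrow> t \<le> y \<Longrightarrow> s \<le> y" "\<And>y. y \<in> T \<Longrightarrow> y < s \<Longrightarrow> y < t"
proof -
  have ne: "{y\<in>T. t \<le> y} \<noteq> {}" "finite {y\<in>T. t \<le> y}" using assms(1,2) by (auto simp: not_less)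
  show "s \<in> T" "t \<le> s" using Min_in[OF ne(2) ne(1)] s_def by auto
  show "\<And>y. y \<in> T \<Longrightarrow> t \<le> y \<Longrightarrow> s \<le> y" using ne s_def by auto
  then show "\<And>y. y \<in> T \<Longrightarrow> y < s \<Longrightarrow> y < t" by (meson not_less)
qed

context alph begin

lemma col_ins:
  assumes T: "finite T" "T \<subseteq> X" and t: "t \<in> X"
  shows "\<exists>R. eqv Plax (t # col T) (col (upd t T) @ R)"
proof (cases "\<forall>y\<in>T. y < t")
  case True
  have "sorted_wrt (>) (t # col T)" using col_props[OF T(1)] True by auto
  then have "col (set (t # col T)) = t # col T" by (rule col_set)
  then have "col (insert t T) = t # col T" using col_props[OF T(1)] by simp
  then show ?thesis using True unfolding upd_def by (intro exI[of _ "[]"]) simp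
next
  case False
  define s where "s = Min {y\<in>T. t \<le> y}"
  note sm = upd_Min[OF T(1) False, folded s_def]
  define U where "U = col {y\<in>T. s < y}"
  define L where "L = col {y\<in>T. y < s}"
  have pU: "sorted_wrt (>) U" "set U = {y\<in>T. s < y}" using col_props[of "{y\<in>T. s < y}"] T U_def by auto
  have pL: "sorted_wrt (>) L" "set L = {y\<in>T. y < s}" using col_props[of "{y\<in>T. y < s}"] T L_def by auto
  have Us: "\<forall>u\<in>set U. s < u" using pU(2) by auto
  have Ls: "\<forall>l\<in>set L. l < s" using pL(2) by auto
  have s1: "sorted_wrt (>) (U @ s # L)" using pU(1) pL(1) Us Ls
    by (auto simp: sorted_wrt_append intro: less_trans)
  have "{y\<in>T. s < y} \<union> insert s {y\<in>T. y < s} = T" using sm(1) by (auto simp: neq_iff)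
  then have "set (U @ s # L) = T" unfolding set_append pU(2) set_simps pL(2) by simp
  then have cT: "col T = U @ s # L" using col_set[OF s1] by simp
  have Lt: "\<forall>y\<in>set L. y < t" using pL(2) sm(4) by auto
  have Ut: "\<forall>y\<in>set U. t < y" using Us sm(2) le_less_trans by blast
  have s2: "sorted_wrt (>) (U @ t # L)" using pU(1) pL(1) Lt Ut
    by (auto simp: sorted_wrt_append intro: less_trans)
  have "t \<notin> {y\<in>T. s < y} \<union> {y\<in>T. y < s}" using sm(2) sm(4) by force
  then have "{y\<in>T. s < y} \<union> insert t {y\<in>T. y < s} = insert t (T - {s})"
    using sm(1) by (auto simp: neq_iff)
  then have "set (U @ t # L) = insert t (T - {s})" unfolding set_append pU(2) set_simps pL(2) by simp
  moreover have "upd t T = insert t (T - {s})" unfolding upd_def s_def by (simp only: if_not_P[OF False])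
  ultimately have cT': "col (upd t T) = U @ t # L" using col_set[OF s2] by simp
  have X: "set U \<subseteq> X" "set L \<subseteq> X" "s \<in> X" using pU pL T sm by auto
  have "eqv Plax (t # U @ [s]) (U @ [t, s])"
    using moveR[OF pU(1) X(1) t X(3)] sm(2) pU(2) by auto
  then have "eqv Plax (t # U @ s # L) (U @ [t, s] @ L)"
    using cg_ctx[of _ "t # U @ [s]" "U @ [t, s]" "[]" L] by simp
  also have "eqv Plax (U @ [t, s] @ L) (U @ t # L @ [s])"
    using cg_ctx[OF moveR2[OF pL(1) X(2) t X(3)], of U "[]"] sm(2) Lt by auto
  finally show ?thesis using cT cT' by (intro exI[of _ "[s]"]) simp
qed

lemma eat:
  assumes T: "finite T" "T \<subseteq> X"
  shows "set v \<subseteq> X \<Longrightarrow> \<exists>R. eqv Plax (v @ col T) (col (foldr upd v T) @ R)"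
proof (induction v)
  case Nil then show ?case by (intro exI[of _ "[]"]) simp
next
  case (Cons t v)
  then obtain R1 where R1: "eqv Plax (v @ col T) (col (foldr upd v T) @ R1)" by auto
  have f: "finite (foldr upd v T)" "foldr upd v T \<subseteq> X"
    using foldr_upd_fin[OF T(1)] foldr_upd_sub[of v T] Cons.prems T by auto
  obtain R2 where R2: "eqv Plax (t # col (foldr upd v T)) (col (upd t (foldr upd v T)) @ R2)"
    using col_ins[OF f] Cons.prems by auto
  have "eqv Plax ((t # v) @ col T) (t # col (foldr upd v T) @ R1)"
    using cg_ctx[OF R1, of "[t]" "[]"] by simp
  also have "eqv Plax (t # col (foldr upd v T) @ R1) (col (upd t (foldr upd v T)) @ R2 @ R1)"
    using cg_ctx[OF R2, of "[]" R1] by simp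
  finally show ?case by auto
qed

end

lemma upd_mono:
  assumes "finite T"
  shows "card {y\<in>T. y \<le> x} \<le> card {y\<in>upd t T. y \<le> x}"
proof (cases "\<forall>y\<in>T. y < t")
  case True
  then show ?thesis using assms unfolding upd_def by (intro card_mono) auto
next
  case False
  define s where "s = Min {y\<in>T. t \<le> y}"
  note sm = upd_Min[OF assms False, folded s_def]
  have u: "upd t T = insert t (T - {s})" unfolding upd_def s_def by (simp only: if_not_P[OF False])
  show ?thesis
  proof (cases "x < s")
    case True
    then show ?thesis using assms unfolding u by (intro card_mono) auto
  next
    case False
    define A where "A = {y\<in>T - {s}. y \<le> x}"
    have fA: "finite A" using assms A_def by auto
    have e1: "{y\<in>T. y \<le> x} = insert s A" using False sm A_def by auto
    have sA: "s \<notin> A" using A_def by auto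
    have tA: "t \<notin> A" using sm A_def by force
    have e2: "insert t A \<subseteq> {y\<in>upd t T. y \<le> x}" using False sm A_def u by auto
    have "card {y\<in>T. y \<le> x} = Suc (card A)" using e1 sA fA by simp
    also have "\<dots> = card (insert t A)" using tA fA by simp
    also have "\<dots> \<le> card {y\<in>upd t T. y \<le> x}"
      using e2 assms upd_fin[OF assms] by (intro card_mono) auto
    finally show ?thesis .
  qed
qed

lemma upd_new:
  assumes "finite T"
  shows "card {y\<in>T. y < t} < card {y\<in>upd t T. y \<le> t}"
proof -
  have sub: "insert t {y\<in>T. y < t} \<subseteq> {y\<in>upd t T. y \<le> t}"
  proof (cases "\<forall>y\<in>T. y < t")
    case True then show ?thesis unfolding upd_def by auto
  next
    case False
    note sm = upd_Min[OF assms False]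
    then show ?thesis using False unfolding upd_def by auto
  qed
  have "card {y\<in>T. y < t} < card (insert t {y\<in>T. y < t})" using assms by simp
  also have "\<dots> \<le> card {y\<in>upd t T. y \<le> t}"
    using sub upd_fin[OF assms] by (intro card_mono) auto
  finally show ?thesis .
qed

lemma foldr_mono:
  "finite T \<Longrightarrow> card {y\<in>T. y \<le> x} \<le> card {y\<in>foldr upd v T. y \<le> x}"
proof (induction v)
  case Nil then show ?case by simp
next
  case (Cons t v)
  have "finite (foldr upd v T)" using foldr_upd_fin[OF Cons.prems] .
  then show ?case using upd_mono[of "foldr upd v T" x t] Cons.IH Cons.prems by simp
qed

lemma count_main:
  assumes B: "set e = B"
  shows "\<forall>x\<in>B. min j (card {y\<in>B. y \<le> x}) \<le> card {y\<in>foldr upd (concat (replicate j e)) {}. y \<le> x}"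
proof (induction j)
  case 0 then show ?case by simp
next
  case (Suc j)
  define Tj where "Tj = foldr upd (concat (replicate j e)) {}"
  have fTj: "finite Tj" unfolding Tj_def by (rule foldr_upd_fin) simp
  have fB: "finite B" using B by auto
  show ?case
  proof
    fix x assume xB: "x \<in> B"
    obtain e1 e2 where ee: "e = e1 @ x # e2" using split_list xB B by metis
    define T2 where "T2 = foldr upd e2 Tj"
    have fT2: "finite T2" unfolding T2_def using foldr_upd_fin[OF fTj] .
    have fin: "foldr upd (concat (replicate (Suc j) e)) {} = foldr upd e1 (upd x T2)"
      unfolding T2_def Tj_def using ee by simp
    define r where "r = card {y\<in>B. y \<le> x}"
    have key: "min j (r - 1) \<le> card {y\<in>T2. y < x}"
    proof (cases "{y\<in>B. y < x} = {}")
      case True then show ?thesis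
      proof -
        have "{y\<in>B. y \<le> x} = {x}" using True xB by force
        then show ?thesis using r_def by simp
      qed
    next
      case False
      define x' where "x' = Max {y\<in>B. y < x}"
      have x'in: "x' \<in> B" "x' < x" using Max_in[OF _ False] fB x'_def by auto
      have eqs: "{y\<in>B. y \<le> x'} = {y\<in>B. y < x}"
        using x'in fB x'_def by (auto intro: Max_ge)
      have r1: "{y\<in>B. y \<le> x} = insert x {y\<in>B. y < x}" using xB by auto
      have "r = Suc (card {y\<in>B. y < x})" using r1 fB r_def by simp
      then have "card {y\<in>B. y \<le> x'} = r - 1" using eqs by simp
      then have "min j (r - 1) \<le> card {y\<in>Tj. y \<le> x'}"
        using Suc.IH x'in Tj_def by metis
      also have "\<dots> \<le> card {y\<in>T2. y \<le> x'}" unfolding T2_def by (rule foldr_mono[OF fTj])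
      also have "\<dots> \<le> card {y\<in>T2. y < x}" using x'in fT2 by (intro card_mono) auto
      finally show ?thesis .
    qed
    have "card {y\<in>T2. y < x} < card {y\<in>upd x T2. y \<le> x}" by (rule upd_new[OF fT2])
    also have "\<dots> \<le> card {y\<in>foldr upd e1 (upd x T2). y \<le> x}"
      by (rule foldr_mono[OF upd_fin[OF fT2]])
    finally have "min j (r - 1) < card {y\<in>foldr upd e1 (upd x T2). y \<le> x}" using key by simp
    moreover have "1 \<le> r" using xB fB r_def by (simp add: Suc_le_eq card_gt_0_iff) blast
    ultimately show "min (Suc j) (card {y\<in>B. y \<le> x}) \<le> card {y\<in>foldr upd (concat (replicate (Suc j) e)) {}. y \<le> x}"
      using fin r_def by simp
  qed
qed

context alph begin

lemma pl_D4:
  assumes e: "set e \<subseteq> X" "eqv Plax (e @ e) e"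
  shows "\<exists>u v. eqv Plax e (u @ col (set e) @ v)"
proof (cases "e = []")
  case True then show ?thesis by (intro exI[of _ "[]"]) (simp add: col_def)
next
  case False
  define B where "B = set e"
  define k where "k = card B"
  have fB: "finite B" unfolding B_def by simp
  have k1: "1 \<le> k" using False fB unfolding k_def B_def by (simp add: Suc_le_eq card_gt_0_iff)
  define v where "v = concat (replicate k e)"
  have setv: "set v = B" using k1 unfolding v_def B_def by (cases k) auto
  have ev: "eqv Plax v e" unfolding v_def by (rule cg_pow[OF e(2) k1])
  obtain R where R: "eqv Plax (v @ col {}) (col (foldr upd v {}) @ R)"
    using eat[of "{}" v] e(1) setv B_def by auto
  define Tk where "Tk = foldr upd v {}"
  have subT: "Tk \<subseteq> B" using foldr_upd_sub[of v "{}"] setv Tk_def by auto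
  have ne: "B \<noteq> {}" using False B_def by simp
  define m where "m = Max B"
  have mB: "m \<in> B" using Max_in[OF fB ne] m_def by simp
  have "{y\<in>B. y \<le> m} = B" using fB m_def by auto
  then have "k \<le> card {y\<in>Tk. y \<le> m}"
    using count_main[of e B k] mB B_def Tk_def v_def k_def by fastforce
  also have "\<dots> \<le> card Tk" using finite_subset[OF subT fB] by (intro card_mono) auto
  finally have "card B \<le> card Tk" using k_def by simp
  then have "Tk = B" using subT fB by (simp add: card_seteq)
  then have "eqv Plax v (col B @ R)" using R Tk_def by (simp add: col_def)
  then have "eqv Plax e (col B @ R)" using cg_sym[OF ev] cg_trans by blast
  then show ?thesis using B_def by (intro exI[of _ "[]"] exI[of _ R]) simp
qed

end

function nest :: "'a list \<Rightarrow> 'a list" where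
  "nest xs = (if length xs \<le> 1 then xs else last xs # hd xs # nest (butlast (tl xs)))"
  by auto
termination by (relation "measure length") auto

declare nest.simps[simp del]

lemma nest_Nil[simp]: "nest [] = []"
  by (simp add: nest.simps)

lemma nest_single[simp]: "nest [x] = [x]"
  by (simp add: nest.simps)

lemma nest_ends[simp]: "nest (a # M @ [c]) = c # a # nest M"
  by (subst nest.simps) simp

lemma ends_induct:
  assumes "P []" "\<And>x. P [x]" "\<And>a M c. P M \<Longrightarrow> P (a # M @ [c])"
  shows "P xs"
proof (induction "length xs" arbitrary: xs rule: less_induct)
  case less
  show ?case
  proof (cases xs)
    case Nil then show ?thesis using assms(1) by simp
  next
    case (Cons a ys)
    show ?thesis
    proof (cases ys rule: rev_cases)
      case Nil then show ?thesis using Cons assms(2) by simp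
    next
      case (snoc M c)
      then show ?thesis using Cons assms(3) less by simp
    qed
  qed
qed

lemma set_nest[simp]: "set (nest xs) = set xs"
  by (induction xs rule: ends_induct) auto

lemma sorted_ends:
  assumes "sorted_wrt (<) (a # M @ [c])"
  shows "sorted_wrt (<) M" "a < c" "\<forall>z\<in>set M. a < z \<and> z < c"
  using assms by (auto simp: sorted_wrt_append)

lemma segment:
  assumes "c \<in> set w1" "a \<in> set w2"
  shows "\<exists>x s y. w1 @ w2 = x @ [c] @ s @ [a] @ y \<and> c \<notin> set s \<and> a \<notin> set s"
proof -
  obtain p q where w2: "w2 = p @ a # q" "a \<notin> set p" using split_list_first[OF assms(2)] by blast
  have "c \<in> set (w1 @ p)" using assms(1) by simp
  then obtain x r where r: "w1 @ p = x @ c # r" "c \<notin> set r" using split_list_last by metis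
  show ?thesis
  proof (cases "a \<in> set r")
    case True
    then obtain r1 r2 where r1: "r = r1 @ a # r2" "a \<notin> set r1" using split_list_first by metis
    have "w1 @ w2 = x @ [c] @ r1 @ [a] @ (r2 @ a # q)" using w2 r r1 by simp
    then show ?thesis using r r1 by (intro exI) auto
  next
    case False
    have "w1 @ w2 = x @ [c] @ r @ [a] @ q" using w2 r by simp
    then show ?thesis using r False by (intro exI) auto
  qed
qed

context alph begin

lemma chA:
  assumes "a \<in> X" "c \<in> X" "x \<in> X" "a < c" "a \<le> x" "x \<le> c"
  shows "eqv Ch [x, c, a] [c, a, x]"
proof -
  consider "x = a" | "x = c" | "a < x \<and> x < c" using assms by fastforce
  then show ?thesis
  proof cases
    case 1 then show ?thesis using ch3[of a c] assms by simp
  next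
    case 2 then show ?thesis using ch4[of a c] assms by simp
  next
    case 3 then show ?thesis using cg_sym[OF ch2[of a x c]] assms by simp
  qed
qed

lemma pairw:
  assumes "a \<in> X" "c \<in> X" "a < c"
  shows "\<forall>z\<in>set w. z \<in> X \<and> a \<le> z \<and> z \<le> c \<Longrightarrow> eqv Ch (w @ [c, a]) ([c, a] @ w)"
proof (induction w)
  case Nil then show ?case by simp
next
  case (Cons y w)
  have "eqv Ch (y # w @ [c, a]) (y # [c, a] @ w)"
    using cg_ctx[OF Cons.IH, of "[y]" "[]"] Cons.prems by simp
  also have "eqv Ch (y # [c, a] @ w) ([c, a, y] @ w)"
    using cg_ctx[OF chA[of a c y], of "[]" w] Cons.prems assms by simp
  finally show ?case by simp
qed

lemma pump_ctx:
  assumes "c \<in> X" "eqv Ch ([c, c] @ p) ([c, c] @ q)"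
  shows "eqv Ch (c # p) (c # q)"
proof -
  define r where "r = replicate (\<sigma> c - 2) c"
  have pc: "eqv Ch [c] (r @ [c, c])" using pump2[OF assms(1)] r_def by simp
  have "eqv Ch ([c] @ p) ((r @ [c, c]) @ p)" using cg_ctx[OF pc, of "[]" p] by simp
  also have "eqv Ch ((r @ [c, c]) @ p) ((r @ [c, c]) @ q)" using cg_ctx[OF assms(2), of r "[]"] by simp
  also have "eqv Ch ((r @ [c, c]) @ q) ([c] @ q)" using cg_ctx[OF cg_sym[OF pc], of "[]" q] by simp
  finally show ?thesis by simp
qed

lemma chQ1:
  assumes "a \<in> X" "c \<in> X" "y \<in> X" "a < y" "y < c"
  shows "eqv Ch [c, a, a, y] [c, a, y, a]"
proof -
  have s1: "eqv Ch [c, a, a] [a, c, a]" using cg_sym[OF ch3[of a c]] assms by auto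
  have s2: "eqv Ch [c, a, y] [c, y, a]" using cg_sym[OF ch1[of a y c]] assms by auto
  have s3: "eqv Ch [c, a, c] [c, c, a]" using cg_sym[OF ch4[of a c]] assms by auto
  have "eqv Ch [c, c, a, a, y] [c, a, c, a, y]" using cg_ctx[OF s1, of "[c]" "[y]"] by simp
  also have "eqv Ch [c, a, c, a, y] [c, a, c, y, a]" using cg_ctx[OF s2, of "[c, a]" "[]"] by simp
  also have "eqv Ch [c, a, c, y, a] [c, c, a, y, a]" using cg_ctx[OF s3, of "[]" "[y, a]"] by simp
  finally show ?thesis using pump_ctx[OF assms(2), of "[a, a, y]" "[a, y, a]"] by simp
qed

lemma chQ2:
  assumes "a \<in> X" "c \<in> X" "y \<in> X" "a < y" "y < c"
  shows "eqv Ch [c, a, c, y] [c, a, y, c]"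
proof -
  have s1: "eqv Ch [c, c, a] [c, a, c]" using ch4[of a c] assms by auto
  have s2: "eqv Ch [c, c, y] [c, y, c]" using ch4[of y c] assms by auto
  have "eqv Ch [c, c, a, c, y] [c, a, c, c, y]" using cg_ctx[OF s1, of "[]" "[c, y]"] by simp
  also have "eqv Ch [c, a, c, c, y] [c, a, c, y, c]" using cg_ctx[OF s2, of "[c, a]" "[]"] by simp
  also have "eqv Ch [c, a, c, y, c] [c, c, a, y, c]" using cg_ctx[OF cg_sym[OF s1], of "[]" "[y, c]"] by simp
  finally show ?thesis using pump_ctx[OF assms(2), of "[a, c, y]" "[a, y, c]"] by simp
qed

lemma chQ3:
  assumes "a \<in> X" "c \<in> X" "a < c"
  shows "eqv Ch [c, a, a, c] [c, a, c, a]"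
proof -
  have s1: "eqv Ch [c, a, a] [a, c, a]" using cg_sym[OF ch3[of a c]] assms by auto
  have s3: "eqv Ch [c, a, c] [c, c, a]" using cg_sym[OF ch4[of a c]] assms by auto
  have "eqv Ch [c, c, a, a, c] [c, a, c, a, c]" using cg_ctx[OF s1, of "[c]" "[c]"] by simp
  also have "eqv Ch [c, a, c, a, c] [c, a, c, c, a]" using cg_ctx[OF s3, of "[c, a]" "[]"] by simp
  also have "eqv Ch [c, a, c, c, a] [c, c, a, c, a]" using cg_ctx[OF s3, of "[]" "[c, a]"] by simp
  finally show ?thesis using pump_ctx[OF assms(2), of "[a, a, c]" "[a, c, a]"] by simp
qed

lemma chT3:
  assumes "a \<in> X" "c \<in> X" "y \<in> X" "a < c" "x = a \<or> x = c" "a \<le> y" "y \<le> c"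
  shows "eqv Ch [c, a, x, y] [c, a, y, x]"
proof -
  consider "y = x" | "x = a" "y = c" | "x = c" "y = a" | "x = a" "a < y" "y < c" | "x = c" "a < y" "y < c"
    using assms by fastforce
  then show ?thesis
  proof cases
    case 1 then show ?thesis by simp
  next
    case 2 then show ?thesis using chQ3[OF assms(1,2,4)] by simp
  next
    case 3 then show ?thesis using cg_sym[OF chQ3[OF assms(1,2,4)]] by simp
  next
    case 4 then show ?thesis using chQ1[OF assms(1,2,3)] by simp
  next
    case 5 then show ?thesis using chQ2[OF assms(1,2,3)] by simp
  qed
qed

lemma chT3gen:
  assumes "a \<in> X" "c \<in> X" "a < c" "x = a \<or> x = c"
  shows "\<forall>z\<in>set N. z \<in> X \<and> a \<le> z \<and> z \<le> c \<Longrightarrow> eqv Ch ([c, a, x] @ N) ([c, a] @ N @ [x])"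
proof (induction N)
  case Nil then show ?case by simp
next
  case (Cons y N)
  have xX: "x \<in> X" "a \<le> x" "x \<le> c" using assms by auto
  have "eqv Ch ([c, a, x] @ y # N) ([c, a, y, x] @ N)"
    using cg_ctx[OF chT3[OF assms(1,2) _ assms(3,4)], of y "[]" N] Cons.prems by simp
  also have "eqv Ch ([c, a, y, x] @ N) ([y, c, a, x] @ N)"
    using cg_ctx[OF cg_sym[OF chA[of a c y]], of "[]" "x # N"] Cons.prems assms by simp
  also have "eqv Ch ([y, c, a, x] @ N) ([y, c, a] @ N @ [x])"
    using cg_ctx[OF Cons.IH, of "[y]" "[]"] Cons.prems by simp
  also have "eqv Ch ([y, c, a] @ N @ [x]) ([c, a, y] @ N @ [x])"
    using cg_ctx[OF chA[of a c y], of "[]" "N @ [x]"] Cons.prems assms by simp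
  finally show ?case by simp
qed

lemma chT1loc:
  assumes "a \<in> X" "x \<in> X" "y \<in> X" "a < x" "a < y"
  shows "\<exists>x' y'. eqv Ch [x, y, a] [x', a, y'] \<and> x' \<in> {x, y} \<and> y' \<in> {x, y} \<and> (y \<le> x \<longrightarrow> x' = x)"
proof -
  consider "y < x" | "x < y" | "x = y" by fastforce
  then show ?thesis
  proof cases
    case 1 then show ?thesis using ch1[of a y x] assms by (intro exI[of _ x] exI[of _ y]) auto
  next
    case 2 then show ?thesis using cg_sym[OF ch2[of a x y]] assms by (intro exI[of _ y] exI[of _ x]) auto
  next
    case 3 then show ?thesis using ch4[of a y] assms by (intro exI[of _ y] exI[of _ y]) auto
  qed
qed

lemma chT1:
  assumes "a \<in> X" "c \<in> X" "a < c"
  shows "\<forall>z\<in>set s. z \<in> X \<and> a < z \<and> z \<le> c \<Longrightarrow> \<exists>s'. eqv Ch (c # s @ [a]) (c # a # s')"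
proof (induction "length s" arbitrary: s rule: less_induct)
  case less
  show ?case
  proof (cases s rule: rev_cases)
    case Nil then show ?thesis by (intro exI[of _ "[]"]) simp
  next
    case (snoc s0 y)
    have y: "y \<in> X" "a < y" "y \<le> c" using less.prems snoc by auto
    show ?thesis
    proof (cases s0 rule: rev_cases)
      case Nil
      obtain x' y' where l: "eqv Ch [c, y, a] [x', a, y']" "y \<le> c \<longrightarrow> x' = c"
        using chT1loc[OF assms(1,2) y(1) assms(3) y(2)] by blast
      then show ?thesis using snoc Nil y by (intro exI[of _ "[y']"]) simp
    next
      case (snoc s1 x)
      have x: "x \<in> X" "a < x" "x \<le> c" using less.prems \<open>s = s0 @ [y]\<close> snoc by auto
      obtain x' y' where l: "eqv Ch [x, y, a] [x', a, y']" "x' \<in> {x, y}"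
        using chT1loc[OF assms(1) x(1) y(1) x(2) y(2)] by blast
      have pr: "\<forall>z\<in>set (s1 @ [x']). z \<in> X \<and> a < z \<and> z \<le> c"
        using less.prems \<open>s = s0 @ [y]\<close> snoc l(2) x y by auto
      have len: "length (s1 @ [x']) < length s" using \<open>s = s0 @ [y]\<close> snoc by simp
      obtain s'' where s'': "eqv Ch (c # (s1 @ [x']) @ [a]) (c # a # s'')"
        using less.hyps[OF len pr] by blast
      have "eqv Ch (c # s @ [a]) (c # s1 @ [x', a, y'])"
        using cg_ctx[OF l(1), of "c # s1" "[]"] \<open>s = s0 @ [y]\<close> snoc by simp
      also have "eqv Ch (c # s1 @ [x', a, y']) (c # a # s'' @ [y'])"
        using cg_ctx[OF s'', of "[]" "[y']"] by simp
      finally show ?thesis by blast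
    qed
  qed
qed

end

context alph begin

lemma chD1:
  "sorted_wrt (<) L \<Longrightarrow> set L \<subseteq> X \<Longrightarrow> x \<in> set L \<Longrightarrow> eqv Ch (x # nest L) (nest L @ [x])"
proof (induction L arbitrary: x rule: ends_induct)
  case 1 then show ?case by simp
next
  case (2 y) then show ?case by simp
next
  case (3 a M c)
  note so = sorted_ends[OF 3(2)]
  have X: "a \<in> X" "c \<in> X" "set M \<subseteq> X" "x \<in> X" using 3 by auto
  have NM: "\<forall>z\<in>set (nest M). z \<in> X \<and> a \<le> z \<and> z \<le> c" using so X by auto
  have xr: "a \<le> x" "x \<le> c" using 3(4) so by auto
  have s1: "eqv Ch (x # c # a # nest M) (c # a # x # nest M)"
    using cg_ctx[OF chA[OF X(1,2,4) so(2) xr], of "[]" "nest M"] by simp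
  show ?case
  proof (cases "x \<in> set M")
    case True
    have "eqv Ch (c # a # x # nest M) (c # a # nest M @ [x])"
      using cg_ctx[OF 3(1)[OF so(1) X(3) True], of "[c, a]" "[]"] by simp
    then show ?thesis using s1 cg_trans by fastforce
  next
    case False
    then have "x = a \<or> x = c" using 3(4) by auto
    then have "eqv Ch ([c, a, x] @ nest M) ([c, a] @ nest M @ [x])"
      using chT3gen[OF X(1,2) so(2)] NM by blast
    then show ?thesis using s1 cg_trans by fastforce
  qed
qed

lemma chD2:
  "sorted_wrt (<) L \<Longrightarrow> set L \<subseteq> X \<Longrightarrow> x \<in> set L \<Longrightarrow> y \<in> set L \<Longrightarrow>
   eqv Ch (nest L @ [x, y]) (nest L @ [y, x])"
proof (induction L arbitrary: x y rule: ends_induct)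
  case 1 then show ?case by simp
next
  case (2 z) then show ?case by simp
next
  case (3 a M c)
  note so = sorted_ends[OF 3(2)]
  have X: "a \<in> X" "c \<in> X" "set M \<subseteq> X" "x \<in> X" "y \<in> X" using 3 by auto
  have NM: "\<forall>z\<in>set (nest M). z \<in> X \<and> a \<le> z \<and> z \<le> c" using so X by auto
  have xr: "a \<le> x" "x \<le> c" "a \<le> y" "y \<le> c" using 3(4,5) so by auto
  show ?case
  proof (cases "x \<in> set M \<and> y \<in> set M")
    case True
    then show ?thesis using cg_ctx[OF 3(1)[OF so(1) X(3), of x y], of "[c, a]" "[]"] by simp
  next
    case False
    have pw: "eqv Ch ([c, a] @ nest M) (nest M @ [c, a])"
      using cg_sym[OF pairw[OF X(1,2) so(2) NM]] .
    have mid: "eqv Ch [c, a, x, y] [c, a, y, x]"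
    proof (cases "x = a \<or> x = c")
      case True then show ?thesis using chT3[OF X(1,2,5) so(2) True xr(3,4)] by simp
    next
      case F: False
      then have "y = a \<or> y = c" using False 3(4,5) by auto
      then show ?thesis using cg_sym[OF chT3[OF X(1,2,4) so(2) _ xr(1,2)]] by blast
    qed
    have "eqv Ch ([c, a] @ nest M @ [x, y]) (nest M @ [c, a] @ [x, y])"
      using cg_ctx[OF pw, of "[]" "[x, y]"] by simp
    also have "eqv Ch (nest M @ [c, a] @ [x, y]) (nest M @ [c, a] @ [y, x])"
      using cg_ctx[OF mid, of "nest M" "[]"] by simp
    also have "eqv Ch (nest M @ [c, a] @ [y, x]) ([c, a] @ nest M @ [y, x])"
      using cg_ctx[OF cg_sym[OF pw], of "[]" "[y, x]"] by simp
    finally show ?thesis by simp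
  qed
qed

lemma ca_c: "a \<in> X \<Longrightarrow> c \<in> X \<Longrightarrow> a < c \<Longrightarrow> eqv Ch ([c, a] @ replicate n c) (c # replicate n c @ [a])"
proof (induction n)
  case 0 then show ?case by simp
next
  case (Suc n)
  have s3: "eqv Ch [c, a, c] [c, c, a]" using cg_sym[OF ch4[of a c]] Suc.prems by auto
  have "eqv Ch ([c, a] @ replicate n c @ [c]) (c # replicate n c @ [a, c])"
    using cg_ctx[OF Suc.IH[OF Suc.prems], of "[]" "[c]"] by simp
  also have "eqv Ch (c # replicate n c @ [a, c]) (c # replicate n c @ [c, a])"
  proof -
    have E1: "c # replicate n c @ [a, c] = replicate n c @ [c, a, c]" by (rule sym, rule rep_snoc)
    have E2: "c # replicate n c @ [c, a] = replicate n c @ [c, c, a]" by (rule sym, rule rep_snoc)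
    have c1: "eqv Ch (replicate n c @ [c, a, c]) (replicate n c @ [c, c, a])"
      using cg_ctx[OF s3, of "replicate n c" "[]"] by simp
    show ?thesis unfolding E1 E2 by (rule c1)
  qed
  finally have fin: "eqv Ch ([c, a] @ replicate n c @ [c]) (c # replicate n c @ [c, a])" .
  have E: "replicate (Suc n) c = replicate n c @ [c]" by (simp add: replicate_append_same)
  show ?case unfolding E using fin by simp
qed

lemma chD3:
  "sorted_wrt (<) L \<Longrightarrow> set L \<subseteq> X \<Longrightarrow> x \<in> set L \<Longrightarrow>
   eqv Ch (nest L @ replicate (\<sigma> x - 1) x) (nest L)"
proof (induction L arbitrary: x rule: ends_induct)
  case 1 then show ?case by simp
next
  case (2 z)
  have e: "[z] @ replicate (\<sigma> z - 1) z = replicate (\<sigma> z) z"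
    using sig2[of z] 2 by (cases "\<sigma> z") auto
  show ?case using 2 pow_rel[of z Ch] e by simp
next
  case (3 a M c)
  note so = sorted_ends[OF 3(2)]
  have X: "a \<in> X" "c \<in> X" "set M \<subseteq> X" "x \<in> X" using 3 by auto
  have NM: "\<forall>z\<in>set (nest M). z \<in> X \<and> a \<le> z \<and> z \<le> c" using so X by auto
  have pw: "eqv Ch ([c, a] @ nest M) (nest M @ [c, a])"
    using cg_sym[OF pairw[OF X(1,2) so(2) NM]] .
  show ?case
  proof (cases "x \<in> set M")
    case True
    then show ?thesis using cg_ctx[OF 3(1)[OF so(1) X(3) True], of "[c, a]" "[]"] by simp
  next
    case False
    then have xac: "x = a \<or> x = c" using 3(4) by auto
    have core: "eqv Ch ([c, a] @ replicate (\<sigma> x - 1) x) [c, a]"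
    proof (cases "x = a")
      case True
      have e: "[a] @ replicate (\<sigma> a - 1) a = replicate (\<sigma> a) a"
        using sig2[OF X(1)] by (cases "\<sigma> a") auto
      show ?thesis using cg_ctx[OF pow_rel[OF X(1), of Ch], of "[c]" "[]"] e True by simp
    next
      case F: False
      then have xc: "x = c" using xac by simp
      have e: "c # replicate (\<sigma> c - 1) c = replicate (\<sigma> c) c"
        using sig2[OF X(2)] by (cases "\<sigma> c") auto
      have "eqv Ch ([c, a] @ replicate (\<sigma> c - 1) c) (replicate (\<sigma> c) c @ [a])"
        using ca_c[OF X(1,2) so(2)] e by (metis append_Cons)
      also have "eqv Ch (replicate (\<sigma> c) c @ [a]) [c, a]"
        using cg_ctx[OF pow_rel[OF X(2), of Ch], of "[]" "[a]"] by simp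
      finally show ?thesis using xc by simp
    qed
    have "eqv Ch ([c, a] @ nest M @ replicate (\<sigma> x - 1) x) (nest M @ [c, a] @ replicate (\<sigma> x - 1) x)"
      using cg_ctx[OF pw, of "[]" "replicate (\<sigma> x - 1) x"] by simp
    also have "eqv Ch (nest M @ [c, a] @ replicate (\<sigma> x - 1) x) (nest M @ [c, a])"
      using cg_ctx[OF core, of "nest M" "[]"] by simp
    also have "eqv Ch (nest M @ [c, a]) ([c, a] @ nest M)" using cg_sym[OF pw] .
    finally show ?thesis by simp
  qed
qed

end

lemma Zw:
  assumes cen: "\<forall>x\<in>S. cong_gen R (x # Z) (Z @ [x])"
  shows "set w \<subseteq> S \<Longrightarrow> cong_gen R (w @ Z) (Z @ w)"
proof (induction w)
  case Nil then show ?case by simp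
next
  case (Cons t w)
  have ih: "cong_gen R (w @ Z) (Z @ w)" using Cons.IH Cons.prems by simp
  have ct: "cong_gen R (t # Z) (Z @ [t])" using cen Cons.prems by simp
  have "cong_gen R ((t # w) @ Z) (t # Z @ w)"
    using cg_ctx[OF ih, of "[t]" "[]"] by simp
  also have "cong_gen R (t # Z @ w) (Z @ t # w)"
    using cg_ctx[OF ct, of "[]" w] by simp
  finally show ?case .
qed

lemma Zmove:
  assumes cen: "\<forall>x\<in>S. cong_gen R (x # Z) (Z @ [x])"
    and h2: "\<forall>x\<in>Ou. \<forall>y\<in>S. cong_gen R (Z @ [x, y]) (Z @ [y, x])"
    and t: "t \<in> Ou"
  shows "set m \<subseteq> S \<Longrightarrow> cong_gen R (Z @ t # m) (Z @ m @ [t])"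
proof (induction m)
  case Nil then show ?case by simp
next
  case (Cons y m)
  have y: "y \<in> S" using Cons.prems by simp
  have "cong_gen R (Z @ t # y # m) (Z @ y # t # m)"
    using cg_ctx[OF h2[rule_format, OF t y], of "[]" m] by simp
  also have "cong_gen R (Z @ y # t # m) (y # Z @ t # m)"
    using cg_ctx[OF cg_sym[OF cen[rule_format, OF y]], of "[]" "t # m"] by simp
  also have "cong_gen R (y # Z @ t # m) (y # Z @ m @ [t])"
    using cg_ctx[OF Cons.IH, of "[y]" "[]"] Cons.prems by simp
  also have "cong_gen R (y # Z @ m @ [t]) (Z @ y # m @ [t])"
    using cg_ctx[OF cen[rule_format, OF y], of "[]" "m @ [t]"] by simp
  finally show ?case by simp
qed

lemma Zfilter:
  assumes cen: "\<forall>x\<in>S. cong_gen R (x # Z) (Z @ [x])"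
    and h2: "\<forall>x\<in>Ou. \<forall>y\<in>S. cong_gen R (Z @ [x, y]) (Z @ [y, x])"
  shows "set w \<subseteq> S \<Longrightarrow> cong_gen R (Z @ w) (Z @ filter (\<lambda>x. x \<notin> Ou) w @ filter (\<lambda>x. x \<in> Ou) w)"
proof (induction w)
  case Nil then show ?case by simp
next
  case (Cons t w)
  have t: "t \<in> S" using Cons.prems by simp
  define fi where "fi = filter (\<lambda>x. x \<notin> Ou) w"
  define fo where "fo = filter (\<lambda>x. x \<in> Ou) w"
  have fiS: "set fi \<subseteq> S" using Cons.prems fi_def by auto
  have "cong_gen R (Z @ t # w) (t # Z @ w)"
    using cg_ctx[OF cg_sym[OF cen[rule_format, OF t]], of "[]" w] by simp
  also have "cong_gen R (t # Z @ w) (t # Z @ fi @ fo)"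
    using cg_ctx[OF Cons.IH, of "[t]" "[]"] Cons.prems fi_def fo_def by simp
  also have "cong_gen R (t # Z @ fi @ fo) (Z @ t # fi @ fo)"
    using cg_ctx[OF cen[rule_format, OF t], of "[]" "fi @ fo"] by simp
  finally have c: "cong_gen R (Z @ t # w) (Z @ t # fi @ fo)" .
  show ?case
  proof (cases "t \<in> Ou")
    case False
    then show ?thesis using c fi_def fo_def by simp
  next
    case True
    have "cong_gen R (Z @ t # fi @ fo) (Z @ fi @ [t] @ fo)"
      using cg_ctx[OF Zmove[OF cen h2 True fiS], of "[]" fo] by simp
    then show ?thesis using c True fi_def fo_def cg_trans by fastforce
  qed
qed

context alph begin

lemma eqv_set: "eqv M u v \<Longrightarrow> set u = set v"
proof (rule cg_set)
  fix p q assume "(p, q) \<in> M_rels M X \<sigma>"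
  then show "set p = set q"
  proof (cases M)
    case Plax
    with \<open>(p, q) \<in> M_rels M X \<sigma>\<close> show ?thesis
      by (auto simp: M_rels_def base_rels_def plax_rels_def pow_rels_def dest: sig2)
  next
    case Ch
    with \<open>(p, q) \<in> M_rels M X \<sigma>\<close> show ?thesis
      by (auto simp: M_rels_def base_rels_def ch_rels_def pow_rels_def dest: sig2)
  qed
qed

lemma ch_D4gen:
  assumes e: "set e \<subseteq> X" "eqv Ch (e @ e) e"
  shows "sorted_wrt (<) L \<Longrightarrow> set L \<subseteq> set e \<Longrightarrow>
    \<forall>x\<in>set e. eqv Ch (x # Z) (Z @ [x]) \<Longrightarrow>
    \<forall>x\<in>set e - set L. \<forall>y\<in>set e. eqv Ch (Z @ [x, y]) (Z @ [y, x]) \<Longrightarrow>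
    eqv Ch e (u @ Z @ v) \<Longrightarrow> \<exists>u' v'. eqv Ch e (u' @ Z @ nest L @ v')"
proof (induction L arbitrary: Z u v rule: ends_induct)
  case 1 then show ?case by auto
next
  case (2 x)
  have xe: "x \<in> set e" using 2 by simp
  have ve: "set v \<subseteq> set e" using eqv_set[OF 2(5)] by auto
  obtain e1 e2 where ee: "e = e1 @ x # e2" using split_list[OF xe] by blast
  have "eqv Ch e (e @ e)" using cg_sym[OF e(2)] .
  also have "eqv Ch (e @ e) ((u @ Z @ v) @ e)" using cg_ctx[OF 2(5), of "[]" e] by simp
  also have "eqv Ch ((u @ Z @ v) @ e) (u @ ((v @ e1) @ Z) @ x # e2)"
    using cg_ctx[OF cg_sym[OF Zw[OF 2(3), of "v @ e1"]], of u "x # e2"] ee ve by auto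
  finally show ?case by (intro exI[of _ "u @ v @ e1"] exI[of _ e2]) simp
next
  case (3 a M c)
  note so = sorted_ends[OF 3(2)]
  define Ou where "Ou = set e - set (a # M @ [c])"
  have ae: "a \<in> set e" "c \<in> set e" using 3(3) by auto
  have aX: "a \<in> X" "c \<in> X" using ae e(1) by auto
  have ve: "set v \<subseteq> set e" using eqv_set[OF 3(6)] by auto
  have "eqv Ch e (e @ e)" using cg_sym[OF e(2)] .
  also have "eqv Ch (e @ e) (e @ e @ e)" using cg_ctx[OF cg_sym[OF e(2)], of e "[]"] by simp
  also have "eqv Ch (e @ e @ e) ((u @ Z @ v) @ e @ e)" using cg_ctx[OF 3(6), of "[]" "e @ e"] by simp
  finally have e3: "eqv Ch e (u @ Z @ v @ e @ e)" by simp
  obtain x1 s y1 where seg: "e @ e = x1 @ [c] @ s @ [a] @ y1" "c \<notin> set s" "a \<notin> set s"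
    using segment[OF ae(2) ae(1)] by blast
  have sube: "set x1 \<subseteq> set e" "set s \<subseteq> set e" "set y1 \<subseteq> set e"
    using arg_cong[OF seg(1), of set] by auto
  have "eqv Ch (u @ Z @ v @ e @ e) (u @ ((v @ x1) @ Z) @ (c # s @ [a]) @ y1)"
    using cg_ctx[OF cg_sym[OF Zw[OF 3(4), of "v @ x1"]], of u "(c # s @ [a]) @ y1"] seg(1) sube
      ve by simp
  also have "eqv Ch (u @ ((v @ x1) @ Z) @ (c # s @ [a]) @ y1)
    (u @ v @ x1 @ Z @ (c # filter (\<lambda>x. x \<notin> Ou) s @ [a]) @ filter (\<lambda>x. x \<in> Ou) s @ y1)"
  proof -
    have sw: "set (c # s @ [a]) \<subseteq> set e" using sube ae by auto
    have zf: "eqv Ch (Z @ (c # s @ [a])) (Z @ filter (\<lambda>x. x \<notin> Ou) (c # s @ [a]) @ filter (\<lambda>x. x \<in> Ou) (c # s @ [a]))"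
      by (rule Zfilter[OF 3(4) _ sw]) (use 3(5) Ou_def in auto)
    have caO: "c \<notin> Ou" "a \<notin> Ou" using Ou_def by auto
    have f1: "filter (\<lambda>x. x \<notin> Ou) (c # s @ [a]) = c # filter (\<lambda>x. x \<notin> Ou) s @ [a]" using caO by simp
    have f2: "filter (\<lambda>x. x \<in> Ou) (c # s @ [a]) = filter (\<lambda>x. x \<in> Ou) s" using caO by simp
    show ?thesis using cg_ctx[OF zf, of "u @ v @ x1" y1] unfolding f1 f2 by simp
  qed
  finally have e4: "eqv Ch e (u @ v @ x1 @ Z @ (c # filter (\<lambda>x. x \<notin> Ou) s @ [a]) @ filter (\<lambda>x. x \<in> Ou) s @ y1)"
    using e3 cg_trans by blast
  define si where "si = filter (\<lambda>x. x \<notin> Ou) s"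
  have siM: "\<forall>z\<in>set si. z \<in> X \<and> a < z \<and> z \<le> c"
  proof
    fix z assume z: "z \<in> set si"
    then have "z \<in> set e" "z \<notin> Ou" "z \<noteq> a" "z \<noteq> c" using si_def sube seg by auto
    then have "z \<in> set M" using Ou_def by auto
    then show "z \<in> X \<and> a < z \<and> z \<le> c" using so e(1) \<open>z \<in> set e\<close> by auto
  qed
  obtain s' where s': "eqv Ch (c # si @ [a]) (c # a # s')" using chT1[OF aX so(2) siM] by blast
  have e5: "eqv Ch e ((u @ v @ x1) @ (Z @ [c, a]) @ (s' @ filter (\<lambda>x. x \<in> Ou) s @ y1))"
    using e4 cg_ctx[OF s', of "u @ v @ x1 @ Z" "filter (\<lambda>x. x \<in> Ou) s @ y1"] si_def cg_trans by fastforce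
  have inL: "\<And>y. y \<in> set (a # M @ [c]) \<Longrightarrow> a \<le> y \<and> y \<le> c" using so by auto
  have cen': "\<forall>x\<in>set e. eqv Ch (x # Z @ [c, a]) ((Z @ [c, a]) @ [x])"
  proof
    fix x assume xe: "x \<in> set e"
    have xX: "x \<in> X" using xe e(1) by auto
    have s1: "eqv Ch (x # Z @ [c, a]) (Z @ [x, c, a])"
      using cg_ctx[OF bspec[OF 3(4) xe], of "[]" "[c, a]"] by simp
    show "eqv Ch (x # Z @ [c, a]) ((Z @ [c, a]) @ [x])"
    proof (cases "a \<le> x \<and> x \<le> c")
      case True
      then show ?thesis using s1 cg_ctx[OF chA[OF aX xX so(2)], of Z "[]"] cg_trans by fastforce
    next
      case False
      then have xO: "x \<in> set e - set (a # M @ [c])" using xe inL by blast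
      have "eqv Ch (Z @ [x, c, a]) (Z @ [c, x, a])"
        using cg_ctx[OF 3(5)[rule_format, OF xO ae(2)], of "[]" "[a]"] by simp
      also have "eqv Ch (Z @ [c, x, a]) (c # Z @ [x, a])"
        using cg_ctx[OF cg_sym[OF bspec[OF 3(4) ae(2)]], of "[]" "[x, a]"] by simp
      also have "eqv Ch (c # Z @ [x, a]) (c # Z @ [a, x])"
        using cg_ctx[OF 3(5)[rule_format, OF xO ae(1)], of "[c]" "[]"] by simp
      also have "eqv Ch (c # Z @ [a, x]) (Z @ [c, a, x])"
        using cg_ctx[OF bspec[OF 3(4) ae(2)], of "[]" "[a, x]"] by simp
      finally show ?thesis using s1 cg_trans by fastforce
    qed
  qed
  have h2': "\<forall>x\<in>set e - set M. \<forall>y\<in>set e. eqv Ch ((Z @ [c, a]) @ [x, y]) ((Z @ [c, a]) @ [y, x])"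
  proof (intro ballI)
    fix x y assume xe: "x \<in> set e - set M" and ye: "y \<in> set e"
    have outc: "\<And>p q. p \<in> set e - set (a # M @ [c]) \<Longrightarrow> q \<in> set e \<Longrightarrow>
        eqv Ch ((Z @ [c, a]) @ [p, q]) ((Z @ [c, a]) @ [q, p])"
    proof -
      fix p q assume p: "p \<in> set e - set (a # M @ [c])" and q: "q \<in> set e"
      have za: "eqv Ch (Z @ [c, a]) ([c, a] @ Z)"
        using cg_sym[OF Zw[OF 3(4), of "[c, a]"]] ae by simp
      have "eqv Ch ((Z @ [c, a]) @ [p, q]) ([c, a] @ Z @ [p, q])"
        using cg_ctx[OF za, of "[]" "[p, q]"] by simp
      also have "eqv Ch ([c, a] @ Z @ [p, q]) ([c, a] @ Z @ [q, p])"
        using cg_ctx[OF 3(5)[rule_format, OF p q], of "[c, a]" "[]"] by simp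
      also have "eqv Ch ([c, a] @ Z @ [q, p]) ((Z @ [c, a]) @ [q, p])"
        using cg_ctx[OF cg_sym[OF za], of "[]" "[q, p]"] by simp
      finally show "eqv Ch ((Z @ [c, a]) @ [p, q]) ((Z @ [c, a]) @ [q, p])" .
    qed
    show "eqv Ch ((Z @ [c, a]) @ [x, y]) ((Z @ [c, a]) @ [y, x])"
    proof (cases "x \<in> set (a # M @ [c])")
      case False then show ?thesis using outc xe ye by blast
    next
      case True
      then have xac: "x = a \<or> x = c" using xe by auto
      show ?thesis
      proof (cases "y \<in> set (a # M @ [c])")
        case True
        have yX: "y \<in> X" using ye e(1) by auto
        have "a \<le> y" "y \<le> c" using inL[OF True] by auto
        then show ?thesis using cg_ctx[OF chT3[OF aX yX so(2) xac], of Z "[]"] by simp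
      next
        case False
        then show ?thesis using cg_sym[OF outc[of y x]] xe ye by blast
      qed
    qed
  qed
  obtain u' v' where r: "eqv Ch e (u' @ (Z @ [c, a]) @ nest M @ v')"
    using 3(1)[OF so(1) _ cen' h2' e5] 3(3) by auto
  then show ?case by (intro exI[of _ u'] exI[of _ v']) simp
qed

lemma ch_D4:
  assumes e: "set e \<subseteq> X" "eqv Ch (e @ e) e"
  shows "\<exists>u v. eqv Ch e (u @ nest (sorted_list_of_set (set e)) @ v)"
proof -
  have "\<exists>u' v'. eqv Ch e (u' @ [] @ nest (sorted_list_of_set (set e)) @ v')"
    by (rule ch_D4gen[OF e, of _ "[]" "[]" e]) auto
  then show ?thesis by simp
qed

end

lemma perm_gen:
  assumes cen: "\<forall>x\<in>S. cong_gen R (x # Z) (Z @ [x])"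
    and com: "\<forall>x\<in>S. \<forall>y\<in>S. cong_gen R (Z @ [x, y]) (Z @ [y, x])"
  shows "set u \<subseteq> S \<Longrightarrow> mset u = mset v \<Longrightarrow> cong_gen R (Z @ u) (Z @ v)"
proof (induction u arbitrary: v)
  case Nil then show ?case by simp
next
  case (Cons x u)
  have xv: "x \<in> set v" using Cons.prems(2) by (metis list.set_intros(1) set_mset_mset)
  obtain v1 v2 where vv: "v = v1 @ x # v2" using split_list[OF xv] by blast
  have mu: "mset u = mset (v1 @ v2)" using Cons.prems(2) vv by simp
  have xS: "x \<in> S" using Cons.prems by simp
  have v1S: "set v1 \<subseteq> S" using Cons.prems vv by (metis Un_subset_iff set_append set_mset_mset)
  have ih: "cong_gen R (Z @ u) (Z @ v1 @ v2)" using Cons.IH[OF _ mu] Cons.prems by simp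
  have "cong_gen R (Z @ x # u) (x # Z @ u)"
    using cg_ctx[OF cg_sym[OF cen[rule_format, OF xS]], of "[]" u] by simp
  also have "cong_gen R (x # Z @ u) (x # Z @ v1 @ v2)" using cg_ctx[OF ih, of "[x]" "[]"] by simp
  also have "cong_gen R (x # Z @ v1 @ v2) (Z @ x # v1 @ v2)"
    using cg_ctx[OF cen[rule_format, OF xS], of "[]" "v1 @ v2"] by simp
  also have "cong_gen R (Z @ x # v1 @ v2) (Z @ v1 @ [x] @ v2)"
    using cg_ctx[OF Zmove[OF cen com xS v1S], of "[]" v2] by simp
  finally show ?case using vv by simp
qed

lemma red_list:
  assumes "n \<le> count (mset u) x"
  shows "\<exists>u'. mset u = mset (replicate n x @ u')"
proof -
  obtain u' where u': "mset u' = mset u - replicate_mset n x" using ex_mset by blast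
  have "replicate_mset n x \<subseteq># mset u" using assms count_le_replicate_mset_subset_eq by metis
  then have "mset u = replicate_mset n x + (mset u - replicate_mset n x)"
    by (simp add: subset_mset.add_diff_inverse)
  then show ?thesis using u' by (intro exI[of _ u']) simp
qed

lemma G:
  assumes cen: "\<forall>x\<in>B. cong_gen R (x # D) (D @ [x])"
    and com: "\<forall>x\<in>B. \<forall>y\<in>B. cong_gen R (D @ [x, y]) (D @ [y, x])"
    and pw: "\<forall>x\<in>B. cong_gen R (D @ replicate (p x) x) D"
    and p1: "\<forall>x\<in>B. 1 \<le> p x"
  shows "set u \<subseteq> B \<Longrightarrow> set v \<subseteq> B \<Longrightarrow>
    \<forall>x\<in>B. count (mset u) x mod p x = count (mset v) x mod p x \<Longrightarrow> cong_gen R (D @ u) (D @ v)"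
proof (induction "length u + length v" arbitrary: u v rule: less_induct)
  case less
  have redu: "\<And>u v x. set u \<subseteq> B \<Longrightarrow> set v \<subseteq> B \<Longrightarrow> x \<in> B \<Longrightarrow> p x \<le> count (mset u) x \<Longrightarrow>
      \<forall>y\<in>B. count (mset u) y mod p y = count (mset v) y mod p y \<Longrightarrow>
      length u + length v < length (u @ v) + 1 + length u \<Longrightarrow>
      \<exists>u'. cong_gen R (D @ u) (D @ u') \<and> set u' \<subseteq> B \<and> length u' < length u \<and>
          (\<forall>y\<in>B. count (mset u') y mod p y = count (mset v) y mod p y)"
  proof -
    fix u v x assume uB: "set u \<subseteq> B" and vB: "set v \<subseteq> B" and xB: "x \<in> B"
      and px: "p x \<le> count (mset u) x" and md: "\<forall>y\<in>B. count (mset u) y mod p y = count (mset v) y mod p y"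
    obtain u' where u': "mset u = mset (replicate (p x) x @ u')" using red_list[OF px] by blast
    have su': "set u' \<subseteq> B" using u' uB by (metis Un_subset_iff set_append set_mset_mset)
    have "cong_gen R (D @ u) (D @ replicate (p x) x @ u')"
      using perm_gen[OF cen com uB u'] .
    also have "cong_gen R (D @ replicate (p x) x @ u') (D @ u')"
      using cg_ctx[OF pw[rule_format, OF xB], of "[]" u'] by simp
    finally have c: "cong_gen R (D @ u) (D @ u')" .
    have len: "length u' < length u"
      using arg_cong[OF u', of size] p1[rule_format, OF xB] by simp
    have "\<forall>y\<in>B. count (mset u') y mod p y = count (mset v) y mod p y"
    proof
      fix y assume yB: "y \<in> B"
      have cu: "count (mset u) y = (if y = x then p x else 0) + count (mset u') y"
        using arg_cong[OF u', of "\<lambda>M. count M y"] by simp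
      show "count (mset u') y mod p y = count (mset v) y mod p y"
        using md yB cu by (cases "y = x") auto
    qed
    then show "\<exists>u'. cong_gen R (D @ u) (D @ u') \<and> set u' \<subseteq> B \<and> length u' < length u \<and>
          (\<forall>y\<in>B. count (mset u') y mod p y = count (mset v) y mod p y)"
      using c su' len by blast
  qed
  show ?case
  proof (cases "\<exists>x\<in>B. p x \<le> count (mset u) x")
    case True
    then obtain x where x: "x \<in> B" "p x \<le> count (mset u) x" by blast
    obtain u' where u': "cong_gen R (D @ u) (D @ u')" "set u' \<subseteq> B" "length u' < length u"
      "\<forall>y\<in>B. count (mset u') y mod p y = count (mset v) y mod p y"
      using redu[OF less.prems(1,2) x less.prems(3)] by auto
    have "cong_gen R (D @ u') (D @ v)" using less.hyps[of u' v] u' less.prems by simp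
    then show ?thesis using u'(1) cg_trans by blast
  next
    case F1: False
    show ?thesis
    proof (cases "\<exists>x\<in>B. p x \<le> count (mset v) x")
      case True
      then obtain x where x: "x \<in> B" "p x \<le> count (mset v) x" by blast
      have md': "\<forall>y\<in>B. count (mset v) y mod p y = count (mset u) y mod p y" using less.prems(3) by simp
      obtain v' where v': "cong_gen R (D @ v) (D @ v')" "set v' \<subseteq> B" "length v' < length v"
        "\<forall>y\<in>B. count (mset v') y mod p y = count (mset u) y mod p y"
        using redu[OF less.prems(2,1) x md'] by auto
      have "cong_gen R (D @ u) (D @ v')" using less.hyps[of u v'] v' less.prems by simp
      then show ?thesis using cg_sym[OF v'(1)] cg_trans by blast
    next
      case F2: False
      have "mset u = mset v"
      proof (rule multiset_eqI)
        fix y show "count (mset u) y = count (mset v) y"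
        proof (cases "y \<in> B")
          case True
          then show ?thesis using F1 F2 less.prems(3) by (metis mod_less not_le)
        next
          case False
          then have "y \<notin> set u" "y \<notin> set v" using less.prems by auto
          then show ?thesis by (metis count_eq_zero_iff set_mset_mset)
        qed
      qed
      then show ?thesis using perm_gen[OF cen com less.prems(1)] by simp
    qed
  qed
qed

lemma count_concat_rep:
  "distinct xs \<Longrightarrow> count (mset (concat (map (\<lambda>b. replicate (f b) b) xs))) y = (if y \<in> set xs then f y else 0)"
  by (induction xs) auto

lemma mset_nest[simp]: "mset (nest xs) = mset xs"
  by (induction xs rule: ends_induct) auto

lemma count_pow: "count (mset (concat (replicate n w))) y = n * count (mset w) y"
  by (induction n) auto

lemma inflation_refl: "inflation w w"
proof (induction w)
  case Nil then show ?case by (rule inflation.intros)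
next
  case (Cons c w)
  have "inflation (c # w) (replicate 1 c @ w)" by (rule inflation.intros(2)) (use Cons in auto)
  then show ?case by simp
qed

lemma cg_powc: "cong_gen R w w' \<Longrightarrow> cong_gen R (concat (replicate n w)) (concat (replicate n w'))"
  by (induction n) (auto intro: cg_app)

definition Dw :: "monoid_kind \<Rightarrow> 'a::linorder set \<Rightarrow> 'a list" where
  "Dw M B = (case M of Plax \<Rightarrow> col B | Ch \<Rightarrow> nest (sorted_list_of_set B))"

lemma Dw_count: "finite B \<Longrightarrow> count (mset (Dw M B)) y = (if y \<in> B then 1 else 0)"
proof -
  assume fB: "finite B"
  have "count (mset (sorted_list_of_set B)) y = (if y \<in> B then 1 else 0)"
    using fB by (metis distinct_count_atmost_1 distinct_sorted_list_of_set set_sorted_list_of_set)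
  then show ?thesis unfolding Dw_def col_def by (cases M) auto
qed

lemma Dw_set: "finite B \<Longrightarrow> set (Dw M B) = B"
  unfolding Dw_def col_def by (cases M) auto

context alph begin

lemma Dprops:
  assumes fB: "finite B" and BX: "B \<subseteq> X"
  shows "\<forall>x\<in>B. eqv M (x # Dw M B) (Dw M B @ [x])"
    "\<forall>x\<in>B. \<forall>y\<in>B. eqv M (Dw M B @ [x, y]) (Dw M B @ [y, x])"
    "\<forall>x\<in>B. eqv M (Dw M B @ replicate (\<sigma> x - 1) x) (Dw M B)"
proof -
  have pc: "sorted_wrt (>) (col B)" "set (col B) = B" using col_props[OF fB] by auto
  have sc: "sorted_wrt (<) (sorted_list_of_set B)" "set (sorted_list_of_set B) = B"
    using fB by (auto simp: strict_sorted_list_of_set)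
  have cX: "set (col B) \<subseteq> X" "set (sorted_list_of_set B) \<subseteq> X" using pc sc BX by auto
  show "\<forall>x\<in>B. eqv M (x # Dw M B) (Dw M B @ [x])"
  proof (cases M)
    case Plax then show ?thesis unfolding Dw_def using pl_central[OF pc(1) cX(1)] pc(2) by simp
  next
    case Ch then show ?thesis unfolding Dw_def using chD1[OF sc(1) cX(2)] sc(2) by simp
  qed
  show "\<forall>x\<in>B. \<forall>y\<in>B. eqv M (Dw M B @ [x, y]) (Dw M B @ [y, x])"
  proof (cases M)
    case Plax then show ?thesis unfolding Dw_def using pl_comm[OF pc(1) cX(1)] pc(2) by simp
  next
    case Ch then show ?thesis unfolding Dw_def using chD2[OF sc(1) cX(2)] sc(2) by simp
  qed
  show "\<forall>x\<in>B. eqv M (Dw M B @ replicate (\<sigma> x - 1) x) (Dw M B)"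
  proof (cases M)
    case Plax then show ?thesis unfolding Dw_def using pl_pow[OF pc(1) cX(1)] pc(2) by simp
  next
    case Ch then show ?thesis unfolding Dw_def using chD3[OF sc(1) cX(2)] sc(2) by simp
  qed
qed

lemma D4:
  assumes "set e \<subseteq> X" "eqv M (e @ e) e"
  shows "\<exists>u v. eqv M e (u @ Dw M (set e) @ v)"
proof (cases M)
  case Plax then show ?thesis unfolding Dw_def using pl_D4 assms by simp
next
  case Ch then show ?thesis unfolding Dw_def using ch_D4 assms by simp
qed

end

lemma mod_pred: "1 \<le> (q::nat) \<Longrightarrow> 1 \<le> m \<Longrightarrow> (q * m - 1) mod q = q - 1"
proof -
  assume q: "1 \<le> q" and m: "1 \<le> m"
  have e: "q * m - 1 = (q - 1) + q * (m - 1)" using q m by (cases m) (auto simp: algebra_simps)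
  have "((q - 1) + q * (m - 1)) mod q = (q - 1) mod q" by simp
  also have "\<dots> = q - 1" using q by simp
  finally show ?thesis unfolding e .
qed

lemma elem_eq: "cong_gen R w w' \<Longrightarrow> elem_of R A w = elem_of R A w'"
  unfolding elem_of_def using cg_sym cg_trans by blast

theorem mainTheorem5:
  fixes A :: "'a::linorder set" and \<sigma> :: "'a \<Rightarrow> nat" and M :: monoid_kind
  assumes "finite A"
    and "\<forall>a \<in> A. \<sigma> a \<ge> 2"
  shows "card (idempotents M A \<sigma>) = 2 ^ card A
    \<and> (\<exists>f. bij_betw f (Pow A) (idempotents M A \<sigma>)
         \<and> (\<forall>B \<in> Pow A. \<exists>I \<in> lists A. f B = elem_of (M_rels M A \<sigma>) A I
               \<and> (\<exists>m. J_min_word M B m \<and> inflation m I)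
               \<and> cong_gen (Com_rels A \<sigma>) I (target_word B \<sigma>)))"
proof -
  interpret alph A \<sigma> by unfold_locales (use assms(2) in auto)
  define R where "R = M_rels M A \<sigma>"
  define V where "V = (\<lambda>B. concat (map (\<lambda>b. replicate (\<sigma> b - 2) b) (sorted_list_of_set B)))"
  define I where "I = (\<lambda>B. Dw M B @ V B)"
  define f where "f = (\<lambda>B. elem_of R A (I B))"
  have cntV: "\<And>B y. finite B \<Longrightarrow> count (mset (V B)) y = (if y \<in> B then \<sigma> y - 2 else 0)"
    unfolding V_def by (subst count_concat_rep) auto
  have cntI: "\<And>B y. B \<subseteq> A \<Longrightarrow> count (mset (I B)) y = (if y \<in> B then \<sigma> y - 1 else 0)"
  proof -
    fix B y assume BA: "B \<subseteq> A"
    have fB: "finite B" using BA assms(1) finite_subset by blast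
    show "count (mset (I B)) y = (if y \<in> B then \<sigma> y - 1 else 0)"
    proof (cases "y \<in> B")
      case True
      then have "2 \<le> \<sigma> y" using assms(2) BA by auto
      then show ?thesis using cntV[OF fB, of y] Dw_count[OF fB, of M y] True unfolding I_def by simp
    next
      case False
      then show ?thesis using cntV[OF fB, of y] Dw_count[OF fB, of M y] unfolding I_def by simp
    qed
  qed
  have setI: "\<And>B. B \<subseteq> A \<Longrightarrow> set (I B) = B"
  proof -
    fix B assume BA: "B \<subseteq> A"
    have fB: "finite B" using BA assms(1) finite_subset by blast
    have "set (V B) \<subseteq> B" unfolding V_def using fB by auto
    then show "set (I B) = B" using Dw_set[OF fB, of M] unfolding I_def by auto
  qed
  have idem: "\<And>B. B \<subseteq> A \<Longrightarrow> eqv M (I B @ I B) (I B)"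
  proof -
    fix B assume BA: "B \<subseteq> A"
    have fB: "finite B" using BA assms(1) finite_subset by blast
    note dp = Dprops[OF fB BA, of M]
    have sV: "set (V B) \<subseteq> B" unfolding V_def using fB by auto
    have p1: "\<forall>x\<in>B. 1 \<le> \<sigma> x - 1" using assms(2) BA by force
    have "eqv M (Dw M B @ (V B @ Dw M B @ V B)) (Dw M B @ V B)"
    proof (rule G[OF dp p1])
      show "set (V B @ Dw M B @ V B) \<subseteq> B" using sV Dw_set[OF fB] by auto
      show "set (V B) \<subseteq> B" by (rule sV)
      show "\<forall>x\<in>B. count (mset (V B @ Dw M B @ V B)) x mod (\<sigma> x - 1) = count (mset (V B)) x mod (\<sigma> x - 1)"
      proof
        fix x assume xB: "x \<in> B"
        have s2: "2 \<le> \<sigma> x" using assms(2) BA xB by auto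
        have "count (mset (V B @ Dw M B @ V B)) x = (\<sigma> x - 1) + (\<sigma> x - 2)"
          using cntV[OF fB, of x] Dw_count[OF fB, of M x] xB s2 by simp
        then show "count (mset (V B @ Dw M B @ V B)) x mod (\<sigma> x - 1) = count (mset (V B)) x mod (\<sigma> x - 1)"
          using cntV[OF fB, of x] xB by simp
      qed
    qed
    then show "eqv M (I B @ I B) (I B)" unfolding I_def by simp
  qed
  have uniq: "\<And>w. w \<in> lists A \<Longrightarrow> eqv M (w @ w) w \<Longrightarrow> eqv M w (I (set w))"
  proof -
    fix w assume wA: "w \<in> lists A" and ww: "eqv M (w @ w) w"
    define B where "B = set w"
    have BA: "B \<subseteq> A" using wA B_def by auto
    have fB: "finite B" using B_def by simp
    note dp = Dprops[OF fB BA, of M]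
    define D where "D = Dw M B"
    obtain u v where uv: "eqv M w (u @ D @ v)" using D4[of w M] wA ww B_def D_def by auto
    have suv: "set u \<subseteq> B" "set v \<subseteq> B" using eqv_set[OF uv] B_def by auto
    have "eqv M (u @ D @ v) (D @ u @ v)"
      using cg_ctx[OF Zw[OF dp(1) suv(1)], of "[]" v] D_def by simp
    then have wg: "eqv M w (D @ u @ v)" using uv cg_trans by blast
    define g where "g = u @ v"
    have sg: "set g \<subseteq> B" using suv g_def by auto
    define N where "N = (\<Prod>b\<in>B. \<sigma> b - 1)"
    have "0 < N" unfolding N_def
    proof (rule prod_pos)
      fix b assume "b \<in> B"
      then have "2 \<le> \<sigma> b" using assms(2) BA by auto
      then show "0 < \<sigma> b - 1" by simp
    qed
    then have N1: "1 \<le> N" by simp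
    have "eqv M w (concat (replicate N w))" using cg_sym[OF cg_pow[OF ww N1]] .
    also have "eqv M (concat (replicate N w)) (concat (replicate N (D @ g)))"
      using cg_powc[OF wg] g_def by simp
    also have "concat (replicate N (D @ g)) = D @ (g @ concat (replicate (N - 1) (D @ g)))"
      using N1 by (cases N) auto
    also have "eqv M (D @ (g @ concat (replicate (N - 1) (D @ g)))) (D @ V B)"
    proof (rule G[OF dp[folded D_def]])
      show "\<forall>x\<in>B. 1 \<le> \<sigma> x - 1" using assms(2) BA by force
      show "set (g @ concat (replicate (N - 1) (D @ g))) \<subseteq> B"
        using sg Dw_set[OF fB] D_def by auto
      show "set (V B) \<subseteq> B" unfolding V_def using fB by auto
      show "\<forall>x\<in>B. count (mset (g @ concat (replicate (N - 1) (D @ g)))) x mod (\<sigma> x - 1) =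
            count (mset (V B)) x mod (\<sigma> x - 1)"
      proof
        fix x assume xB: "x \<in> B"
        define q where "q = \<sigma> x - 1"
        define c where "c = count (mset g) x"
        have q1: "1 \<le> q" using assms(2) BA xB q_def by force
        have qN: "q dvd N" unfolding N_def q_def using xB fB by (simp add: dvd_prod_eqI)
        then obtain K where K: "N = q * K" by blast
        have K1: "1 \<le> K" using K N1 by (cases K) auto
        have cD: "count (mset D) x = 1" using Dw_count[OF fB, of M x] xB D_def by simp
        have "count (mset (g @ concat (replicate (N - 1) (D @ g)))) x = c + (N - 1) * (1 + c)"
          using cD count_pow[of "N - 1" "D @ g" x] c_def by simp
        also have "\<dots> = N * (1 + c) - 1" using N1 by (cases N) (auto simp: algebra_simps)
        also have "\<dots> = q * (K * (1 + c)) - 1" using K by (simp only: mult.assoc)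
        finally have e1: "count (mset (g @ concat (replicate (N - 1) (D @ g)))) x mod q = q - 1"
          using mod_pred[OF q1, of "K * (1 + c)"] K1 by simp
        have "count (mset (V B)) x = q - 1" using cntV[OF fB, of x] xB q_def by simp
        then show "count (mset (g @ concat (replicate (N - 1) (D @ g)))) x mod (\<sigma> x - 1) =
            count (mset (V B)) x mod (\<sigma> x - 1)" using e1 q_def q1 by simp
      qed
    qed
    finally show "eqv M w (I (set w))" unfolding I_def D_def B_def by simp
  qed
  have bij: "bij_betw f (Pow A) (idempotents M A \<sigma>)"
  proof (rule bij_betwI')
    fix B B' assume B: "B \<in> Pow A" and B': "B' \<in> Pow A"
    show "(f B = f B') = (B = B')"
    proof
      assume fe: "f B = f B'"
      have "I B' \<in> elem_of R A (I B')" unfolding elem_of_def using setI[of B'] B' by auto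
      then have "eqv M (I B) (I B')" using fe unfolding f_def elem_of_def R_def by auto
      then show "B = B'" using eqv_set setI B B' by (metis PowD)
    qed simp
  next
    fix B assume B: "B \<in> Pow A"
    show "f B \<in> idempotents M A \<sigma>"
      unfolding f_def idempotents_def R_def using idem[of B] setI[of B] B by auto
  next
    fix Y assume "Y \<in> idempotents M A \<sigma>"
    then obtain w where w: "Y = elem_of R A w" "w \<in> lists A" "eqv M (w @ w) w"
      unfolding idempotents_def R_def by auto
    have "eqv M w (I (set w))" using uniq w by auto
    then have "Y = f (set w)" unfolding f_def using w elem_eq R_def by metis
    moreover have "set w \<in> Pow A" using w by auto
    ultimately show "\<exists>B\<in>Pow A. Y = f B" by blast
  qed
  have card: "card (idempotents M A \<sigma>) = 2 ^ card A"
    using bij_betw_same_card[OF bij] card_Pow[OF assms(1)] by simp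
  have props: "\<forall>B \<in> Pow A. \<exists>I' \<in> lists A. f B = elem_of (M_rels M A \<sigma>) A I'
               \<and> (\<exists>m. J_min_word M B m \<and> inflation m I')
               \<and> cong_gen (Com_rels A \<sigma>) I' (target_word B \<sigma>)"
  proof
    fix B assume B: "B \<in> Pow A"
    have BA: "B \<subseteq> A" using B by simp
    have fB: "finite B" using BA assms(1) finite_subset by blast
    have IA: "I B \<in> lists A" using setI[OF BA] BA by auto
    have jmin: "J_min_word M B (I B)"
    proof -
      interpret B2: alph B "\<lambda>_. 2" by unfold_locales simp
      note dp2 = B2.Dprops[OF fB subset_refl, of M]
      have p1: "\<forall>x\<in>B. 1 \<le> (\<lambda>_. 2::nat) x - 1" by simp
      have sV: "set (V B) \<subseteq> B" unfolding V_def using fB by auto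
      have "\<forall>x\<in>lists B. B2.eqv M (I B) ([] @ x @ I B)"
      proof
        fix x assume xB: "x \<in> lists B"
        have "B2.eqv M (Dw M B @ V B) (Dw M B @ (x @ V B))"
          by (rule G[OF dp2 p1]) (use sV xB in auto)
        also have "B2.eqv M (Dw M B @ (x @ V B)) (x @ Dw M B @ V B)"
          using cg_ctx[OF cg_sym[OF Zw[OF dp2(1), of x]], of "[]" "V B"] xB by auto
        finally show "B2.eqv M (I B) ([] @ x @ I B)" unfolding I_def by simp
      qed
      then show ?thesis unfolding J_min_word_def using setI[OF BA] by fastforce
    qed
    have com: "cong_gen (Com_rels A \<sigma>) (I B) (target_word B \<sigma>)"
    proof -
      have cen: "\<forall>x\<in>A. cong_gen (Com_rels A \<sigma>) (x # []) ([] @ [x])" by simp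
      have cm: "\<forall>x\<in>A. \<forall>y\<in>A. cong_gen (Com_rels A \<sigma>) ([] @ [x, y]) ([] @ [y, x])"
        by (auto intro!: cg_rel simp: Com_rels_def)
      have "mset (I B) = mset (target_word B \<sigma>)"
      proof (rule multiset_eqI)
        fix y
        show "count (mset (I B)) y = count (mset (target_word B \<sigma>)) y"
          using cntI[OF BA, of y] fB unfolding target_word_def by (subst count_concat_rep) auto
      qed
      then show ?thesis using perm_gen[OF cen cm, of "I B" "target_word B \<sigma>"] IA by auto
    qed
    show "\<exists>I' \<in> lists A. f B = elem_of (M_rels M A \<sigma>) A I'
               \<and> (\<exists>m. J_min_word M B m \<and> inflation m I')
               \<and> cong_gen (Com_rels A \<sigma>) I' (target_word B \<sigma>)"
      using IA jmin com inflation_refl[of "I B"] unfolding f_def R_def by blast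
  qed
  show ?thesis using card bij props by blast
qed

end
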